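(* If $G$ is a graph such that $C_4$ is a condensation of $G$ and $q(G)=2$, then $G$ is a double-ended candle.
   Context: For a graph $G$ on $n$ vertices, $\mathcal{S}(G)$ is the set of real symmetric $n\times n$ matrices $A=[a_{ij}]$ with $a_{ij}\neq0$ for $i\ne j$ iff $\{i,j\}\in E(G)$ (diagonal unrestricted); $q(G)$ is the minimum number of distinct eigenvalues of a matrix in $\mathcal{S}(G)$. A vertex $x$ of $G$ is condensable if $N(x)=\{u,v\}$, $N(u)=N(v)$, and $\deg(u)\geq 3$. $H$ is a condensing of $G$ if $H=G-x$ for some condensable vertex $x$ of $G$; $H$ is a condensation of $G$ if there is a sequence $H=G_1,G_2,\dots,G_k=G$ with each $G_i$ a condensing of $G_{i+1}$. Double-ended candle: for $k\geq 2$, the graph $G_k$ on $\{1,\dots,2k\}$ with levels $L_0=\{1\}$, $L_i=\{2i,2i+1\}$ ($1\le i\le k-1$), $L_k=\{2k\}$, two vertices adjacent iff they lie in consecutive levels. *)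

theory Defs
  imports Complex_Main
begin

type_synonym 'a graph = "'a set \<times> 'a set set"

definition verts :: "'a graph \<Rightarrow> 'a set" where "verts G = fst G"
definition edges :: "'a graph \<Rightarrow> 'a set set" where "edges G = snd G"

definition simple_graph :: "'a graph \<Rightarrow> bool" where
  "simple_graph G \<longleftrightarrow> finite (verts G) \<and>
     (\<forall>e\<in>edges G. \<exists>u v. e = {u, v} \<and> u \<noteq> v \<and> u \<in> verts G \<and> v \<in> verts G)"

definition nbhd :: "'a graph \<Rightarrow> 'a \<Rightarrow> 'a set" where
  "nbhd G x = {y \<in> verts G. {x, y} \<in> edges G}"

definition degree :: "'a graph \<Rightarrow> 'a \<Rightarrow> nat" where
  "degree G x = card (nbhd G x)"

definition SG :: "'a graph \<Rightarrow> ('a \<Rightarrow> 'a \<Rightarrow> real) set" where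
  "SG G = {A. (\<forall>i j. A i j = A j i) \<and>
              (\<forall>i j. (i \<notin> verts G \<or> j \<notin> verts G) \<longrightarrow> A i j = 0) \<and>
              (\<forall>i\<in>verts G. \<forall>j\<in>verts G. i \<noteq> j \<longrightarrow> (A i j \<noteq> 0 \<longleftrightarrow> {i, j} \<in> edges G))}"

definition eigenvalues :: "'a set \<Rightarrow> ('a \<Rightarrow> 'a \<Rightarrow> real) \<Rightarrow> real set" where
  "eigenvalues V A = {mu. \<exists>x :: 'a \<Rightarrow> real. (\<exists>i\<in>V. x i \<noteq> 0) \<and>
       (\<forall>i\<in>V. (\<Sum>j\<in>V. A i j * x j) = mu * x i)}"

definition q :: "'a graph \<Rightarrow> nat" where
  "q G = (LEAST k. \<exists>A\<in>SG G. card (eigenvalues (verts G) A) = k)"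

definition condensable :: "'a graph \<Rightarrow> 'a \<Rightarrow> bool" where
  "condensable G x \<longleftrightarrow> x \<in> verts G \<and> (\<exists>u v. u \<noteq> v \<and> nbhd G x = {u, v} \<and>
      nbhd G u = nbhd G v \<and> degree G u \<ge> 3)"

definition delete_vertex :: "'a graph \<Rightarrow> 'a \<Rightarrow> 'a graph" where
  "delete_vertex G x = (verts G - {x}, {e \<in> edges G. x \<notin> e})"

definition condensing :: "'a graph \<Rightarrow> 'a graph \<Rightarrow> bool" where
  "condensing H G \<longleftrightarrow> (\<exists>x. condensable G x \<and> H = delete_vertex G x)"

definition condensation :: "'a graph \<Rightarrow> 'a graph \<Rightarrow> bool" where
  "condensation H G \<longleftrightarrow> condensing\<^sup>*\<^sup>* H G"

definition graph_iso :: "'a graph \<Rightarrow> 'b graph \<Rightarrow> bool" where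
  "graph_iso G H \<longleftrightarrow> (\<exists>f. bij_betw f (verts G) (verts H) \<and>
     (\<forall>u\<in>verts G. \<forall>v\<in>verts G. {u, v} \<in> edges G \<longleftrightarrow> {f u, f v} \<in> edges H))"

definition cycle4 :: "nat graph" where
  "cycle4 = ({0, 1, 2, 3}, {{0, 1}, {1, 2}, {2, 3}, {3, 0}})"

text \<open>Level of vertex v in the double-ended candle G_k: L_0 = {1}, L_i = {2i, 2i+1}, L_k = {2k}.\<close>
definition candle_level :: "nat \<Rightarrow> nat \<Rightarrow> nat" where
  "candle_level k v = (if v = 1 then 0 else if v = 2 * k then k else v div 2)"

definition candle :: "nat \<Rightarrow> nat graph" where
  "candle k = ({1..2 * k}, {{u, v} | u v. u \<in> {1..2 * k} \<and> v \<in> {1..2 * k} \<and>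
       (candle_level k v = candle_level k u + 1)})"

definition double_ended_candle :: "'a graph \<Rightarrow> bool" where
  "double_ended_candle G \<longleftrightarrow> (\<exists>k \<ge> 2. graph_iso G (candle k))"

end

theory Submission
  imports Defs "Jordan_Normal_Form.Char_Poly"
begin


lemma dep_lemma:
  fixes v :: "'k \<Rightarrow> 'a \<Rightarrow> 'f::field"
  assumes "finite V"
  shows "finite K \<Longrightarrow> card V < card K \<Longrightarrow>
     \<exists>c. (\<exists>k\<in>K. c k \<noteq> 0) \<and> (\<forall>i\<in>V. (\<Sum>k\<in>K. c k * v k i) = 0)"
  using assms
proof (induction V arbitrary: K v rule: finite_induct)
  case empty
  then have "K \<noteq> {}" by auto
  then show ?case by (intro exI[of _ "\<lambda>_. 1"]) auto
next
  case (insert a W)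
  show ?case
  proof (cases "\<forall>k\<in>K. v k a = 0")
    case True
    from insert.IH[of K v] insert.prems insert.hyps obtain c where
      c: "\<exists>k\<in>K. c k \<noteq> 0" "\<forall>i\<in>W. (\<Sum>k\<in>K. c k * v k i) = 0" by auto
    show ?thesis using c True by (intro exI[of _ c]) auto
  next
    case False
    then obtain k0 where k0: "k0 \<in> K" "v k0 a \<noteq> 0" by auto
    define K' where "K' = K - {k0}"
    define w where "w k i = v k i - v k a / v k0 a * v k0 i" for k i
    have fK': "finite K'" using insert.prems K'_def by auto
    have cK': "card W < card K'" using insert.prems insert.hyps k0 unfolding K'_def
      by (simp add: card_Diff_singleton)
    from insert.IH[OF fK' cK', of w] obtain c' where
      c': "\<exists>k\<in>K'. c' k \<noteq> 0" "\<forall>i\<in>W. (\<Sum>k\<in>K'. c' k * w k i) = 0" by auto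
    define S where "S = (\<Sum>k\<in>K'. c' k * v k a)"
    define c where "c k = (if k = k0 then - S / v k0 a else c' k)" for k
    have key: "(\<Sum>k\<in>K. c k * v k i) = (\<Sum>k\<in>K'. c' k * w k i)" for i
    proof -
      have "(\<Sum>k\<in>K. c k * v k i) = c k0 * v k0 i + (\<Sum>k\<in>K'. c k * v k i)"
        unfolding K'_def using k0 insert.prems by (simp add: sum.remove)
      also have "(\<Sum>k\<in>K'. c k * v k i) = (\<Sum>k\<in>K'. c' k * v k i)"
        unfolding c_def K'_def by (intro sum.cong) auto
      also have "(\<Sum>k\<in>K'. c' k * v k i) = (\<Sum>k\<in>K'. c' k * w k i) + S / v k0 a * v k0 i"
        unfolding w_def S_def
        by (simp add: algebra_simps sum.distrib sum_distrib_left sum_distrib_right sum_subtractf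
             sum_divide_distrib)
      finally show ?thesis unfolding c_def by (simp add: algebra_simps)
    qed
    show ?thesis
    proof (intro exI[of _ c] conjI)
      show "\<exists>k\<in>K. c k \<noteq> 0" using c' unfolding c_def K'_def by auto
      show "\<forall>i\<in>insert a W. (\<Sum>k\<in>K. c k * v k i) = 0"
      proof
        fix i assume "i \<in> insert a W"
        then show "(\<Sum>k\<in>K. c k * v k i) = 0"
        proof
          assume "i = a" then show ?thesis unfolding key w_def using k0 by simp
        next
          assume "i \<in> W" then show ?thesis unfolding key using c' by simp
        qed
      qed
    qed
  qed
qed

definition Amul :: "'a set \<Rightarrow> ('a \<Rightarrow> 'a \<Rightarrow> real) \<Rightarrow> ('a \<Rightarrow> complex) \<Rightarrow> 'a \<Rightarrow> complex" where
  "Amul V A y = (\<lambda>i. \<Sum>j\<in>V. complex_of_real (A i j) * y j)"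

definition Pap :: "'a set \<Rightarrow> ('a \<Rightarrow> 'a \<Rightarrow> real) \<Rightarrow> complex poly \<Rightarrow> ('a \<Rightarrow> complex) \<Rightarrow> 'a \<Rightarrow> complex" where
  "Pap V A p y = (\<lambda>i. \<Sum>k\<le>Polynomial.degree p. coeff p k * (Amul V A ^^ k) y i)"

lemma Pap_bound: "Polynomial.degree p \<le> M \<Longrightarrow>
   Pap V A p y i = (\<Sum>k\<le>M. coeff p k * (Amul V A ^^ k) y i)"
  unfolding Pap_def by (intro sum.mono_neutral_left) (auto simp: coeff_eq_0)

lemma Pap_add: "Pap V A (p + r) y i = Pap V A p y i + Pap V A r y i"
proof -
  define M where "M = max (Polynomial.degree p) (Polynomial.degree r)"
  have "Polynomial.degree (p + r) \<le> M" unfolding M_def by (rule degree_add_le_max)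
  then show ?thesis
    by (simp add: Pap_bound[of _ M] M_def sum.distrib distrib_right)
qed

lemma Pap_smult: "Pap V A (Polynomial.smult c p) y i = c * Pap V A p y i"
proof -
  have "Polynomial.degree (Polynomial.smult c p) \<le> Polynomial.degree p" by (rule degree_smult_le)
  then show ?thesis
    by (simp add: Pap_bound[of _ "Polynomial.degree p"] sum_distrib_left mult.assoc)
qed

lemma Amul_sum: "finite K \<Longrightarrow> Amul V A (\<lambda>j. \<Sum>k\<in>K. f k * g k j) i = (\<Sum>k\<in>K. f k * Amul V A (g k) i)"
  unfolding Amul_def
  by (simp add: sum_distrib_left sum_distrib_right mult.assoc mult.left_commute[of "complex_of_real _"]
       sum.swap[of _ V])

lemma Pap_pCons0: "Pap V A (pCons 0 p) y i = Amul V A (Pap V A p y) i"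
proof -
  have d: "Polynomial.degree (pCons 0 p) \<le> Suc (Polynomial.degree p)"
    by (simp add: degree_pCons_le)
  have "Pap V A (pCons 0 p) y i = (\<Sum>k\<le>Suc (Polynomial.degree p). coeff (pCons 0 p) k * (Amul V A ^^ k) y i)"
    by (rule Pap_bound[OF d])
  also have "\<dots> = (\<Sum>k\<le>Polynomial.degree p. coeff p k * (Amul V A ^^ Suc k) y i)"
    by (subst sum.atMost_Suc_shift) simp
  also have "\<dots> = (\<Sum>k\<le>Polynomial.degree p. coeff p k * Amul V A ((Amul V A ^^ k) y) i)"
    by simp
  also have "\<dots> = Amul V A (Pap V A p y) i"
    unfolding Pap_def by (subst Amul_sum) auto
  finally show ?thesis .
qed

lemma Pap_const: "Pap V A [:a:] y i = a * y i"
  unfolding Pap_def by simp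

lemma pCons_split: "pCons a p = [:a:] + pCons 0 p"
  by (simp add: add_pCons)

lemma Pap_pCons: "Pap V A (pCons a p) y i = a * y i + Amul V A (Pap V A p y) i"
proof -
  have "Pap V A (pCons a p) y i = Pap V A [:a:] y i + Pap V A (pCons 0 p) y i"
    by (metis Pap_add pCons_split)
  then show ?thesis by (simp only: Pap_const Pap_pCons0)
qed

lemma Pap_zero[simp]: "Pap V A 0 y = (\<lambda>i. 0)"
  unfolding Pap_def by simp

lemma Pap_mult: "Pap V A (p * r) y = Pap V A p (Pap V A r y)"
proof (induction p rule: pCons_induct)
  case 0
  then show ?case by simp
next
  case (pCons a p)
  show ?case
  proof
    fix i
    have "Pap V A (pCons a p * r) y i = Pap V A (Polynomial.smult a r + pCons 0 (p * r)) y i"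
      by (simp add: mult_pCons_left)
    also have "\<dots> = a * Pap V A r y i + Amul V A (Pap V A (p * r) y) i"
      by (simp add: Pap_add Pap_smult Pap_pCons0)
    also have "\<dots> = Pap V A (pCons a p) (Pap V A r y) i"
      by (simp add: Pap_pCons pCons.IH)
    finally show "Pap V A (pCons a p * r) y i = Pap V A (pCons a p) (Pap V A r y) i" .
  qed
qed

lemma Pap_one: "Pap V A 1 y = y"
  unfolding Pap_def by (simp add: one_pCons)

lemma Pap_lin: "Pap V A [:-z, 1:] w i = Amul V A w i - z * w i"
  by (simp add: Pap_pCons Pap_one[unfolded one_pCons])

definition ip :: "'a set \<Rightarrow> ('a \<Rightarrow> complex) \<Rightarrow> ('a \<Rightarrow> complex) \<Rightarrow> complex" where
  "ip V y w = (\<Sum>i\<in>V. y i * cnj (w i))"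

lemma ip_Amul:
  assumes sym: "\<forall>i j. A i j = A j i"
  shows "ip V (Amul V A y) w = ip V y (Amul V A w)"
proof -
  have "ip V (Amul V A y) w = (\<Sum>i\<in>V. \<Sum>j\<in>V. complex_of_real (A i j) * y j * cnj (w i))"
    unfolding ip_def Amul_def by (simp add: sum_distrib_right)
  also have "\<dots> = (\<Sum>j\<in>V. \<Sum>i\<in>V. complex_of_real (A i j) * y j * cnj (w i))"
    by (rule sum.swap)
  also have "\<dots> = ip V y (Amul V A w)"
    unfolding ip_def Amul_def
    by (simp add: sum_distrib_left cnj_sum sym mult.commute mult.left_commute)
  finally show ?thesis .
qed

lemma ip_self_zero:
  assumes "finite V" "ip V u u = 0" "i \<in> V"
  shows "u i = 0"
proof -
  have "ip V u u = complex_of_real (\<Sum>i\<in>V. (Re (u i))\<^sup>2 + (Im (u i))\<^sup>2)"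
    unfolding ip_def by (simp only: complex_mult_cnj of_real_sum)
  then have "(\<Sum>i\<in>V. (Re (u i))\<^sup>2 + (Im (u i))\<^sup>2) = 0" using assms(2) by (metis of_real_eq_0_iff)
  then have "(Re (u i))\<^sup>2 + (Im (u i))\<^sup>2 = 0"
    using assms(1,3) by (subst (asm) sum_nonneg_eq_0_iff) auto
  then show ?thesis by (simp add: complex_eq_iff add_nonneg_eq_0_iff)
qed

lemma ip_scale_left: "ip V (\<lambda>i. z * u i) w = z * ip V u w"
  unfolding ip_def by (simp add: sum_distrib_left mult.assoc)

lemma ip_scale_right: "ip V u (\<lambda>i. z * w i) = cnj z * ip V u w"
  unfolding ip_def by (simp add: sum_distrib_left mult.assoc mult.left_commute)

lemma ip_cong: "(\<And>i. i \<in> V \<Longrightarrow> u i = u' i) \<Longrightarrow> (\<And>i. i \<in> V \<Longrightarrow> w i = w' i) \<Longrightarrow> ip V u w = ip V u' w'"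
  unfolding ip_def by (intro sum.cong) auto

lemma eig_real:
  assumes sym: "\<forall>i j. A i j = A j i" and fin: "finite V"
    and ev: "\<forall>i\<in>V. Amul V A u i = z * u i" and nz: "i0 \<in> V" "u i0 \<noteq> 0"
  shows "z = complex_of_real (Re z) \<and> Re z \<in> eigenvalues V A"
proof -
  have "ip V (Amul V A u) u = z * ip V u u"
    by (subst ip_scale_left[symmetric]) (rule ip_cong, use ev in auto)
  moreover have "ip V u (Amul V A u) = cnj z * ip V u u"
    by (subst ip_scale_right[symmetric]) (rule ip_cong, use ev in auto)
  moreover have "ip V u u \<noteq> 0" using ip_self_zero[OF fin _ nz(1)] nz(2) by blast
  ultimately have zc: "z = cnj z" using ip_Amul[OF sym, of V u u] by simp
  have "Im z = Im (cnj z)" using zc by (rule arg_cong)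
  then have imz: "Im z = 0" by simp
  then have zr: "z = complex_of_real (Re z)" by (simp add: complex_eq_iff)
  have re: "(\<Sum>j\<in>V. A i j * Re (u j)) = Re z * Re (u i)" if "i \<in> V" for i
  proof -
    have "Re (Amul V A u i) = Re (z * u i)" using ev that by simp
    then show ?thesis unfolding Amul_def using imz by (simp add: Re_sum)
  qed
  have im: "(\<Sum>j\<in>V. A i j * Im (u j)) = Re z * Im (u i)" if "i \<in> V" for i
  proof -
    have "Im (Amul V A u i) = Im (z * u i)" using ev that by simp
    then show ?thesis unfolding Amul_def using imz by (simp add: Im_sum)
  qed
  have "Re z \<in> eigenvalues V A"
  proof (cases "Re (u i0) = 0")
    case False
    then show ?thesis unfolding eigenvalues_def using re nz(1)
      by (intro CollectI exI[of _ "\<lambda>j. Re (u j)"]) auto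
  next
    case True
    then have "Im (u i0) \<noteq> 0" using nz(2) complex_eq_iff by auto
    then show ?thesis unfolding eigenvalues_def using im nz(1)
      by (intro CollectI exI[of _ "\<lambda>j. Im (u j)"]) auto
  qed
  with zr show ?thesis by blast
qed

lemma Apow_zeroV: "(\<forall>j\<in>V. y j = 0) \<Longrightarrow> j \<in> V \<Longrightarrow> (Amul V A ^^ k) y j = 0"
proof (induction k arbitrary: j)
  case 0 then show ?case by simp
next
  case (Suc k) then show ?case by (simp add: Amul_def)
qed

lemma Pap_zeroV: assumes "\<forall>j\<in>V. y j = 0" "i \<in> V" shows "Pap V A p y i = 0"
  unfolding Pap_def using Apow_zeroV[OF assms] by simp

lemma Pap_lin_fun: "Pap V A [:-z, 1:] w = (\<lambda>i. Amul V A w i - z * w i)"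
  by (rule ext) (rule Pap_lin)

lemma ip_diff_left: "ip V (\<lambda>i. f i - g i) u = ip V f u - ip V g u"
  unfolding ip_def by (simp add: algebra_simps sum_subtractf)

lemma ip_diff_right: "ip V u (\<lambda>i. f i - g i) = ip V u f - ip V u g"
  unfolding ip_def by (simp add: algebra_simps sum_subtractf)

lemma ip_lin:
  assumes sym: "\<forall>i j. A i j = A j i"
  shows "ip V (Pap V A [:-complex_of_real c,1:] w) u = ip V w (Pap V A [:-complex_of_real c,1:] u)"
proof -
  have "ip V (Pap V A [:-complex_of_real c,1:] w) u = ip V (Amul V A w) u - complex_of_real c * ip V w u"
    by (simp add: Pap_lin_fun ip_diff_left ip_scale_left)
  also have "\<dots> = ip V w (Amul V A u) - cnj (complex_of_real c) * ip V w u"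
    using ip_Amul[OF sym] by simp
  also have "\<dots> = ip V w (Pap V A [:-complex_of_real c,1:] u)"
    by (simp only: Pap_lin_fun ip_diff_right ip_scale_right)
  finally show ?thesis .
qed

lemma annih_B:
  assumes sym: "\<forall>i j. A i j = A j i" and fin: "finite V"
    and ev: "eigenvalues V A \<subseteq> {l1, l2}"
  shows "\<forall>y. (\<forall>i\<in>V. Pap V A (\<Prod>z\<leftarrow>zs. [:-z,1:]) y i = 0) \<longrightarrow>
      (\<forall>i\<in>V. Pap V A ([:-complex_of_real l1,1:] * [:-complex_of_real l2,1:]) y i = 0)"
proof (induction zs)
  case Nil
  show ?case using Pap_zeroV by (auto simp: Pap_one)
next
  case (Cons z zs)
  define Bp where "Bp = [:-complex_of_real l1,1:] * [:-complex_of_real l2,1:]"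
  define L where "L = [:-z,1:]"
  show ?case unfolding Bp_def[symmetric]
  proof (intro allI impI)
    fix y assume H: "\<forall>i\<in>V. Pap V A (\<Prod>z\<leftarrow>z # zs. [:-z,1:]) y i = 0"
    have "Pap V A (\<Prod>z\<leftarrow>zs. [:-z,1:]) (Pap V A L y) = Pap V A (\<Prod>z\<leftarrow>z # zs. [:-z,1:]) y"
      by (simp add: L_def Pap_mult[symmetric] mult.commute)
    with H Cons.IH have h1: "\<forall>i\<in>V. Pap V A Bp (Pap V A L y) i = 0"
      unfolding Bp_def by metis
    define u where "u = Pap V A Bp y"
    have "Pap V A Bp (Pap V A L y) = Pap V A L u"
      unfolding u_def by (simp add: Pap_mult[symmetric] mult.commute)
    with h1 have h2: "\<forall>i\<in>V. Amul V A u i = z * u i" by (simp add: L_def Pap_lin)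
    show "\<forall>i\<in>V. Pap V A Bp y i = 0"
    proof (rule ccontr)
      assume "\<not> (\<forall>i\<in>V. Pap V A Bp y i = 0)"
      then obtain i0 where i0: "i0 \<in> V" "u i0 \<noteq> 0" unfolding u_def by auto
      from eig_real[OF sym fin h2 i0] ev obtain mu nu where
        mu: "z = complex_of_real mu" and Bmu: "Bp = [:-complex_of_real mu,1:] * [:-complex_of_real nu,1:]"
        unfolding Bp_def by (auto simp: mult.commute)
      define w where "w = Pap V A [:-complex_of_real nu,1:] y"
      have uw: "u = Pap V A [:-complex_of_real mu,1:] w"
        unfolding u_def w_def Bmu Pap_mult ..
      have zero: "\<forall>i\<in>V. Pap V A [:-complex_of_real mu,1:] u i = 0"
        using h2 mu by (simp add: Pap_lin)
      have "ip V u u = ip V w (Pap V A [:-complex_of_real mu,1:] u)"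
        by (subst (1) uw) (rule ip_lin[OF sym])
      also have "\<dots> = 0" unfolding ip_def using zero by simp
      finally have "ip V u u = 0" .
      then show False using ip_self_zero[OF fin _ i0(1)] i0(2) by blast
    qed
  qed
qed

lemma annih_exists:
  assumes fin: "finite V"
  shows "\<exists>zs. \<forall>i\<in>V. Pap V A (\<Prod>z\<leftarrow>zs. [:-z,1:]) y i = 0"
proof -
  define n where "n = card V"
  have "card V < card {..n}" unfolding n_def by simp
  from dep_lemma[OF fin _ this, of "\<lambda>k i. (Amul V A ^^ k) y i"] obtain c :: "nat \<Rightarrow> complex" where
    c: "\<exists>k\<in>{..n}. c k \<noteq> 0" "\<forall>i\<in>V. (\<Sum>k\<in>{..n}. c k * (Amul V A ^^ k) y i) = 0" by auto
  define p where "p = (\<Sum>k\<le>n. monom (c k) k)"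
  have cp: "coeff p j = (if j \<le> n then c j else 0)" for j
    unfolding p_def by (simp add: coeff_sum coeff_monom)
  have dp: "Polynomial.degree p \<le> n" by (rule degree_le) (simp add: cp)
  have p0: "p \<noteq> 0" using c(1) cp by (metis atMost_iff coeff_0)
  have Pp: "\<forall>i\<in>V. Pap V A p y i = 0"
    using c(2) by (simp add: Pap_bound[OF dp] cp)
  obtain as where as: "Polynomial.smult (coeff p (Polynomial.degree p)) (\<Prod>a\<leftarrow>as. [:- a, 1:]) = p"
    using fundamental_theorem_algebra_factorized[of p] by blast
  have lc: "coeff p (Polynomial.degree p) \<noteq> 0" using p0 by simp
  have "\<forall>i\<in>V. Pap V A (\<Prod>a\<leftarrow>as. [:- a, 1:]) y i = 0"
  proof
    fix i assume "i \<in> V"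
    with Pp have "Pap V A p y i = 0" by blast
    then have "coeff p (Polynomial.degree p) * Pap V A (\<Prod>a\<leftarrow>as. [:- a, 1:]) y i = 0"
      by (subst (asm) as[symmetric]) (simp only: Pap_smult)
    with lc show "Pap V A (\<Prod>a\<leftarrow>as. [:- a, 1:]) y i = 0" by simp
  qed
  then show ?thesis by blast
qed

lemma spectral_O:
  assumes sg: "simple_graph G" and qG: "q G = 2"
  shows "\<exists>A\<in>SG G. \<forall>i\<in>verts G. \<forall>j\<in>verts G. i \<noteq> j \<longrightarrow> {i,j} \<notin> edges G \<longrightarrow>
            (\<Sum>k\<in>verts G. A i k * A k j) = 0"
proof -
  define V where "V = verts G"
  have fin: "finite V" using sg unfolding simple_graph_def V_def by auto
  define Adj where "Adj i j = (if i \<in> V \<and> j \<in> V \<and> {i,j} \<in> edges G then 1 else 0 :: real)" for i j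
  have "Adj \<in> SG G" unfolding SG_def Adj_def V_def by (auto simp: insert_commute)
  then have ex: "\<exists>k. \<exists>A\<in>SG G. card (eigenvalues (verts G) A) = k" by blast
  from LeastI_ex[OF ex] qG obtain A where A: "A \<in> SG G" "card (eigenvalues V A) = 2"
    unfolding q_def V_def by auto
  from A(2) obtain l1 l2 where ev: "eigenvalues V A = {l1, l2}" by (auto simp: card_2_iff)
  have sym: "\<forall>i j. A i j = A j i" using A(1) unfolding SG_def by auto
  have Az: "A i j = 0" if "i \<in> V" "j \<in> V" "i \<noteq> j" "{i,j} \<notin> edges G" for i j
    using A(1) that unfolding SG_def V_def by auto
  show ?thesis unfolding V_def[symmetric]
  proof (intro bexI[OF _ A(1)] ballI impI)
    fix i j assume ij: "i \<in> V" "j \<in> V" "i \<noteq> j" "{i,j} \<notin> edges G"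
    define y where "y t = (if t = j then 1 else 0 :: complex)" for t
    obtain zs where "\<forall>i\<in>V. Pap V A (\<Prod>z\<leftarrow>zs. [:-z,1:]) y i = 0"
      using annih_exists[OF fin] by blast
    with annih_B[OF sym fin, of l1 l2 zs] ev ij(1)
    have "Pap V A ([:-complex_of_real l1,1:] * [:-complex_of_real l2,1:]) y i = 0" by auto
    then have h: "Pap V A [:-complex_of_real l1,1:] (Pap V A [:-complex_of_real l2,1:] y) i = 0"
      by (simp only: Pap_mult)
    have Ay: "Amul V A y t = complex_of_real (A t j)" for t
      unfolding Amul_def y_def using ij(2) fin by (simp add: if_distrib sum.delta' cong: if_cong)
    have yi: "y i = 0" using ij(3) y_def by simp
    have "Pap V A [:-complex_of_real l1,1:] (Pap V A [:-complex_of_real l2,1:] y) i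
        = Amul V A (\<lambda>t. complex_of_real (A t j) - complex_of_real l2 * y t) i
          - complex_of_real l1 * (complex_of_real (A i j) - complex_of_real l2 * y i)"
      by (simp add: Pap_lin_fun Ay)
    also have "Amul V A (\<lambda>t. complex_of_real (A t j) - complex_of_real l2 * y t) i
        = complex_of_real (\<Sum>k\<in>V. A i k * A k j) - complex_of_real l2 * Amul V A y i"
      unfolding Amul_def by (simp add: algebra_simps sum_subtractf sum_distrib_left)
    finally have "complex_of_real (\<Sum>k\<in>V. A i k * A k j) = 0"
      using h Az[OF ij] yi by (simp add: Ay Az[OF ij])
    then show "(\<Sum>k\<in>V. A i k * A k j) = 0" by (metis of_real_eq_0_iff)
  qed
qed




lemma nb_sub: "nbhd G x \<subseteq> verts G" unfolding nbhd_def by auto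

lemma sg_fin: "simple_graph G \<Longrightarrow> finite (verts G)" unfolding simple_graph_def by auto

lemma nb_fin: "simple_graph G \<Longrightarrow> finite (nbhd G x)"
  using nb_sub sg_fin finite_subset by metis

lemma sg_edge: "simple_graph G \<Longrightarrow> {a,b} \<in> edges G \<Longrightarrow> a \<in> verts G \<and> b \<in> verts G \<and> a \<noteq> b"
proof -
  assume "simple_graph G" "{a,b} \<in> edges G"
  then obtain u v where "{a,b} = {u,v}" "u \<noteq> v" "u \<in> verts G" "v \<in> verts G"
    unfolding simple_graph_def by blast
  then show ?thesis by (auto simp: doubleton_eq_iff)
qed

lemma nb_edge: assumes "simple_graph G" shows "({a,b} \<in> edges G) = (b \<in> nbhd G a)"
  unfolding nbhd_def using sg_edge[OF assms, of a b] by auto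

lemma nb_sym: "simple_graph G \<Longrightarrow> (b \<in> nbhd G a) = (a \<in> nbhd G b)"
  using nb_edge[of G a b] nb_edge[of G b a] by (simp add: insert_commute)

lemma nb_symD: "simple_graph G \<Longrightarrow> b \<in> nbhd G a \<Longrightarrow> a \<in> nbhd G b"
  using nb_sym by metis

lemma nb_irr: "simple_graph G \<Longrightarrow> a \<notin> nbhd G a"
  using nb_edge[of G a a] sg_edge[of G a a] by auto

lemma nb_V: "b \<in> nbhd G a \<Longrightarrow> b \<in> verts G" unfolding nbhd_def by auto

lemma nb_V2: "simple_graph G \<Longrightarrow> b \<in> nbhd G a \<Longrightarrow> a \<in> verts G"
  using nb_sym nb_V by metis

lemma del_verts: "verts (delete_vertex G x) = verts G - {x}"
  unfolding delete_vertex_def verts_def by simp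

lemma del_nb: "w \<noteq> x \<Longrightarrow> nbhd (delete_vertex G x) w = nbhd G w - {x}"
  unfolding delete_vertex_def nbhd_def verts_def edges_def by auto

lemma del_nb_sub: "nbhd (delete_vertex G x) w \<subseteq> nbhd G w"
  unfolding delete_vertex_def nbhd_def verts_def edges_def by auto

lemma del_simple: "simple_graph G \<Longrightarrow> simple_graph (delete_vertex G x)"
  unfolding simple_graph_def delete_vertex_def verts_def edges_def by simp fastforce

lemma twins_nonadj: "simple_graph G \<Longrightarrow> nbhd G a = nbhd G b \<Longrightarrow> b \<notin> nbhd G a"
  using nb_irr by metis

definition finv :: "'a graph \<Rightarrow> bool" where
  "finv G \<longleftrightarrow> simple_graph G \<and>
  (\<forall>p\<in>verts G. \<forall>s\<in>verts G. \<forall>r\<in>verts G. p \<noteq> s \<and> p \<noteq> r \<and> s \<noteq> r \<and> nbhd G p = nbhd G s \<and> nbhd G p = nbhd G r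
      \<longrightarrow> (\<exists>a b. a \<noteq> b \<and> nbhd G p = {a,b} \<and> nbhd G a = nbhd G b)) \<and>
  (\<forall>p\<in>verts G. (\<forall>s\<in>verts G. s \<noteq> p \<longrightarrow> nbhd G s \<noteq> nbhd G p)
      \<longrightarrow> (\<exists>a b. a \<noteq> b \<and> nbhd G p = {a,b} \<and> nbhd G a = nbhd G b)) \<and>
  (\<forall>p\<in>verts G. \<forall>s\<in>verts G. p \<noteq> s \<and> s \<notin> nbhd G p \<and> nbhd G p \<noteq> nbhd G s
      \<longrightarrow> card (nbhd G p \<inter> nbhd G s) \<le> 2) \<and>
  (\<forall>a b c. b \<in> nbhd G a \<longrightarrow> c \<in> nbhd G b \<longrightarrow> c \<notin> nbhd G a) \<and>
  (\<forall>p\<in>verts G. 2 \<le> card (nbhd G p)) \<and>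
  (\<forall>a\<in>verts G. \<forall>b\<in>verts G. (\<lambda>s t. t \<in> nbhd G s)\<^sup>*\<^sup>* a b) \<and>
  (\<exists>x\<in>verts G. \<exists>u v. u \<noteq> v \<and> nbhd G x = {u,v} \<and> nbhd G u = nbhd G v)"

lemma finvD:
  assumes "finv G"
  shows finv_sg: "simple_graph G"
  and finv4: "\<forall>p\<in>verts G. \<forall>s\<in>verts G. \<forall>r\<in>verts G. p \<noteq> s \<and> p \<noteq> r \<and> s \<noteq> r \<and> nbhd G p = nbhd G s \<and> nbhd G p = nbhd G r
      \<longrightarrow> (\<exists>a b. a \<noteq> b \<and> nbhd G p = {a,b} \<and> nbhd G a = nbhd G b)"
  and finv5: "\<forall>p\<in>verts G. (\<forall>s\<in>verts G. s \<noteq> p \<longrightarrow> nbhd G s \<noteq> nbhd G p)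
      \<longrightarrow> (\<exists>a b. a \<noteq> b \<and> nbhd G p = {a,b} \<and> nbhd G a = nbhd G b)"
  and finv6: "\<forall>p\<in>verts G. \<forall>s\<in>verts G. p \<noteq> s \<and> s \<notin> nbhd G p \<and> nbhd G p \<noteq> nbhd G s
      \<longrightarrow> card (nbhd G p \<inter> nbhd G s) \<le> 2"
  and finv7: "\<forall>a b c. b \<in> nbhd G a \<longrightarrow> c \<in> nbhd G b \<longrightarrow> c \<notin> nbhd G a"
  and finv8: "\<forall>p\<in>verts G. 2 \<le> card (nbhd G p)"
  and finv9: "\<forall>a\<in>verts G. \<forall>b\<in>verts G. (\<lambda>s t. t \<in> nbhd G s)\<^sup>*\<^sup>* a b"
  and finv10: "\<exists>x\<in>verts G. \<exists>u v. u \<noteq> v \<and> nbhd G x = {u,v} \<and> nbhd G u = nbhd G v"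
proof -
  note c = assms[unfolded finv_def]
  show "simple_graph G"
    using c by (rule conjunct1)
  show "\<forall>p\<in>verts G. \<forall>s\<in>verts G. \<forall>r\<in>verts G. p \<noteq> s \<and> p \<noteq> r \<and> s \<noteq> r \<and> nbhd G p = nbhd G s \<and> nbhd G p = nbhd G r
      \<longrightarrow> (\<exists>a b. a \<noteq> b \<and> nbhd G p = {a,b} \<and> nbhd G a = nbhd G b)"
    using c[THEN conjunct2] by (rule conjunct1)
  show "\<forall>p\<in>verts G. (\<forall>s\<in>verts G. s \<noteq> p \<longrightarrow> nbhd G s \<noteq> nbhd G p)
      \<longrightarrow> (\<exists>a b. a \<noteq> b \<and> nbhd G p = {a,b} \<and> nbhd G a = nbhd G b)"
    using c[THEN conjunct2, THEN conjunct2] by (rule conjunct1)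
  show "\<forall>p\<in>verts G. \<forall>s\<in>verts G. p \<noteq> s \<and> s \<notin> nbhd G p \<and> nbhd G p \<noteq> nbhd G s
      \<longrightarrow> card (nbhd G p \<inter> nbhd G s) \<le> 2"
    using c[THEN conjunct2, THEN conjunct2, THEN conjunct2] by (rule conjunct1)
  show "\<forall>a b c. b \<in> nbhd G a \<longrightarrow> c \<in> nbhd G b \<longrightarrow> c \<notin> nbhd G a"
    using c[THEN conjunct2, THEN conjunct2, THEN conjunct2, THEN conjunct2] by (rule conjunct1)
  show "\<forall>p\<in>verts G. 2 \<le> card (nbhd G p)"
    using c[THEN conjunct2, THEN conjunct2, THEN conjunct2, THEN conjunct2, THEN conjunct2] by (rule conjunct1)
  show "\<forall>a\<in>verts G. \<forall>b\<in>verts G. (\<lambda>s t. t \<in> nbhd G s)\<^sup>*\<^sup>* a b"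
    using c[THEN conjunct2, THEN conjunct2, THEN conjunct2, THEN conjunct2, THEN conjunct2, THEN conjunct2] by (rule conjunct1)
  show "\<exists>x\<in>verts G. \<exists>u v. u \<noteq> v \<and> nbhd G x = {u,v} \<and> nbhd G u = nbhd G v"
    using c[THEN conjunct2, THEN conjunct2, THEN conjunct2, THEN conjunct2, THEN conjunct2, THEN conjunct2, THEN conjunct2] .
qed

lemma card_le2: "A \<subseteq> {a,b} \<Longrightarrow> card A \<le> 2"
proof -
  assume "A \<subseteq> {a,b}"
  then have "card A \<le> card {a,b}" by (intro card_mono) auto
  also have "\<dots> \<le> 2" by (simp add: card_insert_if)
  finally show ?thesis .
qed




lemma finv_step:
  assumes sg: "simple_graph G" and cx: "condensable G x" and fH: "finv (delete_vertex G x)"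
  shows "finv G"
proof -
  define H where "H = delete_vertex G x"
  obtain u0 v0 where xV: "x \<in> verts G" and uv: "u0 \<noteq> v0" and Nx: "nbhd G x = {u0,v0}"
    and tw: "nbhd G u0 = nbhd G v0"
    using cx unfolding condensable_def by blast
  have sgH: "simple_graph H" unfolding H_def by (rule del_simple[OF sg])
  have fH': "finv H" using fH unfolding H_def .
  note I4H = finv4[OF fH', rule_format]
  note I5H = finv5[OF fH', rule_format]
  note I6H = finv6[OF fH', rule_format]
  note I7H = finv7[OF fH', rule_format]
  note I8H = finv8[OF fH', rule_format]
  note I9H = finv9[OF fH', rule_format]
  have VH: "verts H = verts G - {x}" unfolding H_def by (rule del_verts)
  have hH: "\<And>w. w \<noteq> x \<Longrightarrow> nbhd H w = nbhd G w - {x}" unfolding H_def by (rule del_nb)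
  have xin: "\<And>w. (x \<in> nbhd G w) = (w = u0 \<or> w = v0)"
    using nb_sym[OF sg, of x] Nx by simp
  have u0V: "u0 \<in> verts G" "v0 \<in> verts G" using Nx nb_sub[of G x] by auto
  have u0x: "u0 \<noteq> x" "v0 \<noteq> x" using Nx nb_irr[OF sg, of x] by auto
  have xH: "\<And>w. x \<notin> nbhd H w" using nb_sub[of H] VH by blast
  have NG: "\<And>w. w \<noteq> x \<Longrightarrow> nbhd G w = (if w = u0 \<or> w = v0 then insert x (nbhd H w) else nbhd H w)"
  proof -
    fix w assume "w \<noteq> x"
    then show "nbhd G w = (if w = u0 \<or> w = v0 then insert x (nbhd H w) else nbhd H w)"
      using hH[of w] xin[of w] by auto
  qed
  have u0v0: "u0 \<notin> nbhd G v0" "v0 \<notin> nbhd G u0" using tw nb_irr[OF sg] by metis+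
  have twH: "nbhd H u0 = nbhd H v0" using hH u0x tw by simp
  have T: "\<And>a b p. a \<in> verts H \<Longrightarrow> b \<in> verts H \<Longrightarrow> nbhd H a = nbhd H b \<Longrightarrow> p \<in> verts G \<Longrightarrow>
      nbhd G p = {a,b} \<Longrightarrow> nbhd G a = nbhd G b"
  proof -
    fix a b p assume ab: "a \<in> verts H" "b \<in> verts H" "nbhd H a = nbhd H b" and p: "p \<in> verts G"
      and Np: "nbhd G p = {a,b}"
    have abx: "a \<noteq> x" "b \<noteq> x" using ab VH by auto
    have both: "(a = u0 \<or> a = v0) = (b = u0 \<or> b = v0)"
    proof
      assume "a = u0 \<or> a = v0"
      then have "p \<in> nbhd G u0" using Np nb_symD[OF sg, of _ p] tw by auto
      then have "u0 \<in> nbhd G p" "v0 \<in> nbhd G p" using nb_symD[OF sg, of p] tw by auto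
      then show "b = u0 \<or> b = v0" using Np uv by auto
    next
      assume "b = u0 \<or> b = v0"
      then have "p \<in> nbhd G u0" using Np nb_symD[OF sg, of _ p] tw by auto
      then have "u0 \<in> nbhd G p" "v0 \<in> nbhd G p" using nb_symD[OF sg, of p] tw by auto
      then show "a = u0 \<or> a = v0" using Np uv by auto
    qed
    show "nbhd G a = nbhd G b" using NG[OF abx(1)] NG[OF abx(2)] both ab(3) by simp
  qed
  have twG: "\<And>p s. p \<noteq> x \<Longrightarrow> s \<noteq> x \<Longrightarrow> (nbhd G p = nbhd G s) =
      (nbhd H p = nbhd H s \<and> ((p = u0 \<or> p = v0) = (s = u0 \<or> s = v0)))"
  proof -
    fix p s assume "p \<noteq> x" "s \<noteq> x"
    then show "(nbhd G p = nbhd G s) = (nbhd H p = nbhd H s \<and> ((p = u0 \<or> p = v0) = (s = u0 \<or> s = v0)))"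
      using NG[of p] NG[of s] xH[of p] xH[of s] by (auto simp: insert_ident)
  qed
  have xVH: "\<And>w. w \<in> verts H \<Longrightarrow> w \<noteq> x" using VH by auto
  have VHi: "\<And>w. w \<in> verts G \<Longrightarrow> w \<noteq> x \<Longrightarrow> w \<in> verts H" using VH by auto
  have u0H: "u0 \<in> verts H" "v0 \<in> verts H" using VHi u0V u0x by auto
  have I4: "\<forall>p\<in>verts G. \<forall>s\<in>verts G. \<forall>r\<in>verts G. p \<noteq> s \<and> p \<noteq> r \<and> s \<noteq> r \<and> nbhd G p = nbhd G s \<and> nbhd G p = nbhd G r
      \<longrightarrow> (\<exists>a b. a \<noteq> b \<and> nbhd G p = {a,b} \<and> nbhd G a = nbhd G b)"
  proof (intro ballI impI)
    fix p s r assume V: "p \<in> verts G" "s \<in> verts G" "r \<in> verts G"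
      and h: "p \<noteq> s \<and> p \<noteq> r \<and> s \<noteq> r \<and> nbhd G p = nbhd G s \<and> nbhd G p = nbhd G r"
    show "\<exists>a b. a \<noteq> b \<and> nbhd G p = {a,b} \<and> nbhd G a = nbhd G b"
    proof (cases "p = x \<or> s = x \<or> r = x")
      case True
      then have "nbhd G p = {u0,v0}" using h Nx by auto
      then show ?thesis using uv tw by blast
    next
      case False
      have nin: "\<not> (p = u0 \<or> p = v0)"
      proof
        assume "p = u0 \<or> p = v0"
        then have "x \<in> nbhd G p" using xin by blast
        then have "x \<in> nbhd G s" "x \<in> nbhd G r" using h by auto
        then have "s = u0 \<or> s = v0" "r = u0 \<or> r = v0" using xin by blast+
        with \<open>p = u0 \<or> p = v0\<close> h show False by blast
      qed
      then have "\<not> (s = u0 \<or> s = v0)" "\<not> (r = u0 \<or> r = v0)" using h twG False by blast+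
      then have tH: "nbhd H p = nbhd H s" "nbhd H p = nbhd H r" using h twG False nin by blast+
      have "p \<in> verts H" "s \<in> verts H" "r \<in> verts H" using V False VHi by auto
      from I4H[OF this] h tH obtain a b where ab: "a \<noteq> b" "nbhd H p = {a,b}" "nbhd H a = nbhd H b"
        by blast
      have NpH: "nbhd G p = nbhd H p" using NG[of p] False nin by simp
      have abH: "a \<in> verts H" "b \<in> verts H" using ab(2) nb_sub[of H p] by auto
      have "nbhd G a = nbhd G b" using T[OF abH ab(3) V(1)] NpH ab(2) by simp
      then show ?thesis using ab NpH by auto
    qed
  qed
  have I5: "\<forall>p\<in>verts G. (\<forall>s\<in>verts G. s \<noteq> p \<longrightarrow> nbhd G s \<noteq> nbhd G p)
      \<longrightarrow> (\<exists>a b. a \<noteq> b \<and> nbhd G p = {a,b} \<and> nbhd G a = nbhd G b)"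
  proof (intro ballI impI)
    fix p assume pV: "p \<in> verts G" and nt: "\<forall>s\<in>verts G. s \<noteq> p \<longrightarrow> nbhd G s \<noteq> nbhd G p"
    show "\<exists>a b. a \<noteq> b \<and> nbhd G p = {a,b} \<and> nbhd G a = nbhd G b"
    proof (cases "p = x")
      case True then show ?thesis using Nx uv tw by blast
    next
      case px: False
      have nin: "\<not> (p = u0 \<or> p = v0)" using nt u0V uv tw by metis
      have NpH: "nbhd G p = nbhd H p" using NG[of p] px nin by simp
      have pH: "p \<in> verts H" using VHi pV px by blast
      obtain a b where ab: "a \<noteq> b" "nbhd H p = {a,b}" "nbhd H a = nbhd H b"
      proof (cases "\<exists>s\<in>verts H. s \<noteq> p \<and> nbhd H s = nbhd H p")
        case True
        then obtain s where s: "s \<in> verts H" "s \<noteq> p" "nbhd H s = nbhd H p" by blast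
        have "s = u0 \<or> s = v0"
        proof (rule ccontr)
          assume "\<not> (s = u0 \<or> s = v0)"
          then have "nbhd G s = nbhd G p" using twG[of s p] xVH[OF s(1)] px s(3) nin by blast
          then show False using nt s VH by auto
        qed
        then have "nbhd H p = nbhd H u0" "nbhd H p = nbhd H v0" using s(3) twH by auto
        moreover have "p \<noteq> u0" "p \<noteq> v0" using nin by auto
        ultimately show ?thesis using I4H[OF pH u0H] uv that by blast
      next
        case False
        then show ?thesis using I5H[OF pH] that by blast
      qed
      have abH: "a \<in> verts H" "b \<in> verts H" using ab(2) nb_sub[of H p] by auto
      have "nbhd G a = nbhd G b" using T[OF abH ab(3) pV] NpH ab(2) by simp
      then show ?thesis using ab NpH by auto
    qed
  qed
  have I6: "\<forall>p\<in>verts G. \<forall>s\<in>verts G. p \<noteq> s \<and> s \<notin> nbhd G p \<and> nbhd G p \<noteq> nbhd G s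
      \<longrightarrow> card (nbhd G p \<inter> nbhd G s) \<le> 2"
  proof (intro ballI impI)
    fix p s assume pV: "p \<in> verts G" and sV: "s \<in> verts G"
      and h: "p \<noteq> s \<and> s \<notin> nbhd G p \<and> nbhd G p \<noteq> nbhd G s"
    show "card (nbhd G p \<inter> nbhd G s) \<le> 2"
    proof (cases "p = x \<or> s = x")
      case True
      then have "nbhd G p \<inter> nbhd G s \<subseteq> {u0,v0}" using Nx by auto
      then show ?thesis by (rule card_le2)
    next
      case False
      have pH: "p \<in> verts H" and sH: "s \<in> verts H" using VHi pV sV False by auto
      have nboth: "\<not> ((p = u0 \<or> p = v0) \<and> (s = u0 \<or> s = v0))" using h tw by auto
      have inter: "nbhd G p \<inter> nbhd G s = nbhd H p \<inter> nbhd H s"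
        using NG[of p] NG[of s] False nboth xH[of p] xH[of s] by auto
      show ?thesis
      proof (cases "nbhd H p = nbhd H s")
        case False
        have "s \<notin> nbhd H p" using h del_nb_sub[of G x p] H_def by auto
        then show ?thesis using I6H[OF pH sH] h False inter by simp
      next
        case True
        then have diff: "(p = u0 \<or> p = v0) \<noteq> (s = u0 \<or> s = v0)"
          using twG[of p s] \<open>\<not> (p = x \<or> s = x)\<close> h by blast
        show ?thesis
        proof (cases "p = u0 \<or> p = v0")
          case True
          then have "nbhd H s = nbhd H u0" "nbhd H s = nbhd H v0" "s \<noteq> u0" "s \<noteq> v0"
            using \<open>nbhd H p = nbhd H s\<close> twH diff by auto
          then obtain a b where "nbhd H s = {a,b}" using I4H[OF sH u0H] uv by blast
          then show ?thesis using inter card_le2[of "nbhd H p \<inter> nbhd H s" a b] by auto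
        next
          case False
          then have "nbhd H p = nbhd H u0" "nbhd H p = nbhd H v0" "p \<noteq> u0" "p \<noteq> v0"
            using \<open>nbhd H p = nbhd H s\<close> twH diff by auto
          then obtain a b where "nbhd H p = {a,b}" using I4H[OF pH u0H] uv by blast
          then show ?thesis using inter card_le2[of "nbhd H p \<inter> nbhd H s" a b] by auto
        qed
      qed
    qed
  qed
  have I7: "\<forall>a b c. b \<in> nbhd G a \<longrightarrow> c \<in> nbhd G b \<longrightarrow> c \<notin> nbhd G a"
  proof (intro allI impI notI)
    fix a b c assume h: "b \<in> nbhd G a" "c \<in> nbhd G b" "c \<in> nbhd G a"
    have xadj: "\<And>y z. y \<in> nbhd G x \<Longrightarrow> z \<in> nbhd G x \<Longrightarrow> z \<notin> nbhd G y"
      using Nx u0v0 nb_irr[OF sg] by auto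
    have s1: "a \<in> nbhd G b" "b \<in> nbhd G c" "a \<in> nbhd G c"
      using h nb_symD[OF sg] by blast+
    show False
    proof (cases "a = x \<or> b = x \<or> c = x")
      case True
      then show False using xadj h s1 by metis
    next
      case False
      then have "b \<in> nbhd H a" "c \<in> nbhd H b" "c \<in> nbhd H a" using h hH by auto
      then show False using I7H by blast
    qed
  qed
  have I8: "\<forall>p\<in>verts G. 2 \<le> card (nbhd G p)"
  proof
    fix p assume pV: "p \<in> verts G"
    show "2 \<le> card (nbhd G p)"
    proof (cases "p = x")
      case True then show ?thesis using Nx uv by simp
    next
      case False
      then have "2 \<le> card (nbhd H p)" using I8H VHi pV by blast
      also have "\<dots> \<le> card (nbhd G p)"
        using card_mono[OF nb_fin[OF sg, of p] del_nb_sub[of G x p]] H_def by simp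
      finally show ?thesis .
    qed
  qed
  have mono: "(\<lambda>s t. t \<in> nbhd H s)\<^sup>*\<^sup>* \<le> (\<lambda>s t. t \<in> nbhd G s)\<^sup>*\<^sup>*"
    by (rule rtranclp_mono) (use del_nb_sub[of G x] H_def in blast)
  have I9: "\<forall>a\<in>verts G. \<forall>b\<in>verts G. (\<lambda>s t. t \<in> nbhd G s)\<^sup>*\<^sup>* a b"
  proof (intro ballI)
    fix a b assume aV: "a \<in> verts G" and bV: "b \<in> verts G"
    have xu: "u0 \<in> nbhd G x" "x \<in> nbhd G u0" using Nx xin by auto
    have r1: "(\<lambda>s t. t \<in> nbhd G s)\<^sup>*\<^sup>* a u0"
    proof (cases "a = x")
      case True then show ?thesis using xu by auto
    next
      case False then show ?thesis using I9H[of a u0] VHi aV u0H mono by blast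
    qed
    have r2: "(\<lambda>s t. t \<in> nbhd G s)\<^sup>*\<^sup>* u0 b"
    proof (cases "b = x")
      case True then show ?thesis using xu by auto
    next
      case False then show ?thesis using I9H[of u0 b] VHi bV u0H mono by blast
    qed
    show "(\<lambda>s t. t \<in> nbhd G s)\<^sup>*\<^sup>* a b" using r1 r2 by (rule rtranclp_trans)
  qed
  have I10: "\<exists>x\<in>verts G. \<exists>u v. u \<noteq> v \<and> nbhd G x = {u,v} \<and> nbhd G u = nbhd G v"
    using xV uv Nx tw by blast
  show ?thesis unfolding finv_def by (intro conjI sg I4 I5 I6 I7 I8 I9 I10)
qed



lemma c4_edges: "edges cycle4 = {{0,1},{1,2},{2,3},{3,0}}" "verts cycle4 = {0,1,2,3}"
  unfolding cycle4_def edges_def verts_def by simp_all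
lemma e4: "({a,b} \<in> {{0::nat,1},{1,2},{2,3},{3,0}}) = ((a=0\<and>b=1) \<or> (a=1\<and>b=0) \<or> (a=1\<and>b=2) \<or> (a=2\<and>b=1)
   \<or> (a=2\<and>b=3) \<or> (a=3\<and>b=2) \<or> (a=3\<and>b=0) \<or> (a=0\<and>b=3))"
  by (simp add: doubleton_eq_iff)

lemma e4c: "({a,b} \<in> edges cycle4) = ((a=0\<and>b=1) \<or> (a=1\<and>b=0) \<or> (a=1\<and>b=2) \<or> (a=2\<and>b=1)
   \<or> (a=2\<and>b=3) \<or> (a=3\<and>b=2) \<or> (a=3\<and>b=0) \<or> (a=0\<and>b=3))"
  unfolding c4_edges(1) by (rule e4)

lemma finv_c4:
  assumes sg: "simple_graph H" and iso: "graph_iso H cycle4"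
  shows "finv H"
proof -
  obtain f where bij0: "bij_betw f (verts H) (verts cycle4)"
    and ep0: "\<forall>a\<in>verts H. \<forall>b\<in>verts H. ({a,b} \<in> edges H) = ({f a, f b} \<in> edges cycle4)"
    using iso unfolding graph_iso_def by blast
  have bij: "bij_betw f (verts H) {0,1,2,3}" using bij0 unfolding c4_edges .
  have ep: "\<And>a b. a \<in> verts H \<Longrightarrow> b \<in> verts H \<Longrightarrow> ({a,b} \<in> edges H) = ({f a, f b} \<in> edges cycle4)"
    using ep0 by blast
  have img: "f ` verts H = {0,1,2,3}" using bij by (simp add: bij_betw_def)
  have ex: "\<exists>p\<in>verts H. f p = i" if "i \<in> {0,1,2,3}" for i
  proof -
    have "i \<in> f ` verts H" using that img by simp
    then obtain p where "p \<in> verts H" "i = f p" by (rule imageE)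
    then show ?thesis by blast
  qed
  obtain p0 where P0: "p0 \<in> verts H" "f p0 = 0" using ex[of 0] by auto
  obtain p1 where P1: "p1 \<in> verts H" "f p1 = 1" using ex[of 1] by auto
  obtain p2 where P2: "p2 \<in> verts H" "f p2 = 2" using ex[of 2] by auto
  obtain p3 where P3: "p3 \<in> verts H" "f p3 = 3" using ex[of 3] by auto
  note P = P0 P1 P2 P3
  have inj: "inj_on f (verts H)" using bij bij_betw_def by blast
  have fV: "f w \<in> {0,1,2,3}" if "w \<in> verts H" for w using img that by (metis imageI)
  have V: "verts H = {p0,p1,p2,p3}"
  proof
    show "verts H \<subseteq> {p0,p1,p2,p3}"
    proof
      fix w assume w: "w \<in> verts H"
      from fV[OF w] have "f w = f p0 \<or> f w = f p1 \<or> f w = f p2 \<or> f w = f p3" using P by auto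
      then show "w \<in> {p0,p1,p2,p3}" using inj_onD[OF inj _ w] P by auto
    qed
    show "{p0,p1,p2,p3} \<subseteq> verts H" using P by auto
  qed
  have d: "p0 \<noteq> p1" "p0 \<noteq> p2" "p0 \<noteq> p3" "p1 \<noteq> p2" "p1 \<noteq> p3" "p2 \<noteq> p3"
    using P by auto
  have nbf: "nbhd H w = {t \<in> verts H. {f w, f t} \<in> edges cycle4}" if "w \<in> verts H" for w
    unfolding nbhd_def by (rule Collect_cong) (use ep[OF that] in blast)
  have N0: "nbhd H p0 = {p1,p3}"
  proof (rule Set.set_eqI)
    fix t show "t \<in> nbhd H p0 \<longleftrightarrow> t \<in> {p1,p3}" unfolding nbf[OF P0(1)] e4c V using P by auto
  qed
  have N1: "nbhd H p1 = {p0,p2}"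
  proof (rule Set.set_eqI)
    fix t show "t \<in> nbhd H p1 \<longleftrightarrow> t \<in> {p0,p2}" unfolding nbf[OF P1(1)] e4c V using P by auto
  qed
  have N2: "nbhd H p2 = {p1,p3}"
  proof (rule Set.set_eqI)
    fix t show "t \<in> nbhd H p2 \<longleftrightarrow> t \<in> {p1,p3}" unfolding nbf[OF P2(1)] e4c V using P by auto
  qed
  have N3: "nbhd H p3 = {p0,p2}"
  proof (rule Set.set_eqI)
    fix t show "t \<in> nbhd H p3 \<longleftrightarrow> t \<in> {p0,p2}" unfolding nbf[OF P3(1)] e4c V using P by auto
  qed
  have ne: "{p1,p3} \<noteq> {p0,p2}" using d by (auto simp: doubleton_eq_iff)
  have I4: "\<forall>p\<in>verts H. \<forall>s\<in>verts H. \<forall>r\<in>verts H. p \<noteq> s \<and> p \<noteq> r \<and> s \<noteq> r \<and> nbhd H p = nbhd H s \<and> nbhd H p = nbhd H r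
      \<longrightarrow> (\<exists>a b. a \<noteq> b \<and> nbhd H p = {a,b} \<and> nbhd H a = nbhd H b)"
    unfolding V using N0 N1 N2 N3 ne d by auto
  have I5: "\<forall>p\<in>verts H. (\<forall>s\<in>verts H. s \<noteq> p \<longrightarrow> nbhd H s \<noteq> nbhd H p)
      \<longrightarrow> (\<exists>a b. a \<noteq> b \<and> nbhd H p = {a,b} \<and> nbhd H a = nbhd H b)"
    unfolding V using N0 N1 N2 N3 d by auto
  have I6: "\<forall>p\<in>verts H. \<forall>s\<in>verts H. p \<noteq> s \<and> s \<notin> nbhd H p \<and> nbhd H p \<noteq> nbhd H s
      \<longrightarrow> card (nbhd H p \<inter> nbhd H s) \<le> 2"
    unfolding V using N0 N1 N2 N3 d by auto
  have I7: "\<forall>a b c. b \<in> nbhd H a \<longrightarrow> c \<in> nbhd H b \<longrightarrow> c \<notin> nbhd H a"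
  proof (intro allI impI)
    fix a b c assume h: "b \<in> nbhd H a" "c \<in> nbhd H b"
    then have "a \<in> verts H" using nb_V2[OF sg] by metis
    then show "c \<notin> nbhd H a" using h unfolding V using N0 N1 N2 N3 d by auto
  qed
  have I8: "\<forall>p\<in>verts H. 2 \<le> card (nbhd H p)"
    unfolding V using N0 N1 N2 N3 d by auto
  have r0: "(\<lambda>s t. t \<in> nbhd H s)\<^sup>*\<^sup>* p0 w" if "w \<in> verts H" for w
  proof -
    have a: "(\<lambda>s t. t \<in> nbhd H s)\<^sup>*\<^sup>* p0 p1" "(\<lambda>s t. t \<in> nbhd H s)\<^sup>*\<^sup>* p0 p3"
      using N0 by auto
    have "(\<lambda>s t. t \<in> nbhd H s)\<^sup>*\<^sup>* p0 p2" using a(1) N1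
      by (metis (mono_tags, lifting) insertCI rtranclp.rtrancl_into_rtrancl)
    then show ?thesis using a that V by auto
  qed
  have r1: "(\<lambda>s t. t \<in> nbhd H s)\<^sup>*\<^sup>* w p0" if "w \<in> verts H" for w
  proof -
    have a: "(\<lambda>s t. t \<in> nbhd H s)\<^sup>*\<^sup>* p1 p0" "(\<lambda>s t. t \<in> nbhd H s)\<^sup>*\<^sup>* p3 p0"
      using N1 N3 by auto
    have "(\<lambda>s t. t \<in> nbhd H s)\<^sup>*\<^sup>* p2 p0" using a(1) N2
      by (metis (mono_tags, lifting) insertCI converse_rtranclp_into_rtranclp)
    then show ?thesis using a that V by auto
  qed
  have I9: "\<forall>a\<in>verts H. \<forall>b\<in>verts H. (\<lambda>s t. t \<in> nbhd H s)\<^sup>*\<^sup>* a b"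
    using r0 r1 by (meson rtranclp_trans)
  have I10: "\<exists>x\<in>verts H. \<exists>u v. u \<noteq> v \<and> nbhd H x = {u,v} \<and> nbhd H u = nbhd H v"
    using P(1) N0 N1 N3 d by blast
  show ?thesis unfolding finv_def by (intro conjI sg I4 I5 I6 I7 I8 I9 I10)
qed

lemma finv_chain:
  assumes "condensation H G" "graph_iso H cycle4" "simple_graph G"
  shows "finv G"
proof -
  have "condensing\<^sup>*\<^sup>* H G" using assms(1) unfolding condensation_def .
  then have "simple_graph G \<longrightarrow> finv G"
  proof (induction rule: rtranclp_induct)
    case base
    then show ?case using finv_c4 assms(2) by blast
  next
    case (step y z)
    show ?case
    proof
      assume sz: "simple_graph z"
      from step.hyps(2) obtain x where cx: "condensable z x" and yd: "y = delete_vertex z x"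
        unfolding condensing_def by blast
      have "finv y" using step.IH del_simple[OF sz] yd by blast
      then show "finv z" using finv_step[OF sz cx] yd by blast
    qed
  qed
  then show ?thesis using assms(3) by blast
qed




definition zinv :: "'a graph \<Rightarrow> 'a \<Rightarrow> bool" where
  "zinv G x \<longleftrightarrow> simple_graph G \<and> x \<in> verts G \<and>
   (\<exists>u v. u \<noteq> v \<and> nbhd G x = {u,v} \<and> nbhd G u = nbhd G v) \<and>
   (\<forall>p\<in>verts G. \<forall>s\<in>verts G. \<forall>r\<in>verts G. p \<noteq> s \<and> p \<noteq> r \<and> s \<noteq> r \<and> nbhd G p = nbhd G s \<and> nbhd G p = nbhd G r \<longrightarrow> False) \<and>
   (\<forall>w\<in>verts G. \<forall>p s r. p \<in> nbhd G w \<and> s \<in> nbhd G w \<and> r \<in> nbhd G w \<and> nbhd G p \<noteq> nbhd G s \<and>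
       nbhd G p \<noteq> nbhd G r \<and> nbhd G s \<noteq> nbhd G r \<longrightarrow> False) \<and>
   (\<forall>p\<in>verts G. (\<forall>s\<in>verts G. s \<noteq> p \<longrightarrow> nbhd G s \<noteq> nbhd G p) \<longrightarrow> card (nbhd G p) = 2) \<and>
   (\<forall>p\<in>verts G. 2 \<le> card (nbhd G p)) \<and>
   (\<forall>p s r c d. p \<in> verts G \<and> s \<in> verts G \<and> r \<in> verts G \<and> p \<noteq> s \<and> p \<noteq> r \<and> s \<noteq> r \<and>
       s \<notin> nbhd G p \<and> r \<notin> nbhd G p \<and> r \<notin> nbhd G s \<and> c \<noteq> d \<and>
       nbhd G p \<inter> nbhd G s = {c,d} \<and> nbhd G p \<inter> nbhd G r = {c,d} \<and> nbhd G s \<inter> nbhd G r = {c,d} \<longrightarrow> False) \<and>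
   (\<forall>b\<in>verts G. (\<lambda>s t. t \<in> nbhd G s)\<^sup>*\<^sup>* x b)"

lemma zinvD:
  assumes "zinv G x"
  shows zinv_sg: "simple_graph G"
  and zinv_x: "x \<in> verts G"
  and zinv1: "\<exists>u v. u \<noteq> v \<and> nbhd G x = {u,v} \<and> nbhd G u = nbhd G v"
  and zinv2: "\<forall>p\<in>verts G. \<forall>s\<in>verts G. \<forall>r\<in>verts G. p \<noteq> s \<and> p \<noteq> r \<and> s \<noteq> r \<and> nbhd G p = nbhd G s \<and> nbhd G p = nbhd G r \<longrightarrow> False"
  and zinv3: "\<forall>w\<in>verts G. \<forall>p s r. p \<in> nbhd G w \<and> s \<in> nbhd G w \<and> r \<in> nbhd G w \<and> nbhd G p \<noteq> nbhd G s \<and>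
       nbhd G p \<noteq> nbhd G r \<and> nbhd G s \<noteq> nbhd G r \<longrightarrow> False"
  and zinv4: "\<forall>p\<in>verts G. (\<forall>s\<in>verts G. s \<noteq> p \<longrightarrow> nbhd G s \<noteq> nbhd G p) \<longrightarrow> card (nbhd G p) = 2"
  and zinv5: "\<forall>p\<in>verts G. 2 \<le> card (nbhd G p)"
  and zinvC: "\<forall>p s r c d. p \<in> verts G \<and> s \<in> verts G \<and> r \<in> verts G \<and> p \<noteq> s \<and> p \<noteq> r \<and> s \<noteq> r \<and>
       s \<notin> nbhd G p \<and> r \<notin> nbhd G p \<and> r \<notin> nbhd G s \<and> c \<noteq> d \<and>
       nbhd G p \<inter> nbhd G s = {c,d} \<and> nbhd G p \<inter> nbhd G r = {c,d} \<and> nbhd G s \<inter> nbhd G r = {c,d} \<longrightarrow> False"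
  and zinv9: "\<forall>b\<in>verts G. (\<lambda>s t. t \<in> nbhd G s)\<^sup>*\<^sup>* x b"
proof -
  note c = assms[unfolded zinv_def]
  show "simple_graph G" using c by (rule conjunct1)
  show "x \<in> verts G" using c[THEN conjunct2] by (rule conjunct1)
  show "\<exists>u v. u \<noteq> v \<and> nbhd G x = {u,v} \<and> nbhd G u = nbhd G v"
    using c[THEN conjunct2, THEN conjunct2] by (rule conjunct1)
  show "\<forall>p\<in>verts G. \<forall>s\<in>verts G. \<forall>r\<in>verts G. p \<noteq> s \<and> p \<noteq> r \<and> s \<noteq> r \<and> nbhd G p = nbhd G s \<and> nbhd G p = nbhd G r \<longrightarrow> False"
    using c[THEN conjunct2, THEN conjunct2, THEN conjunct2] by (rule conjunct1)
  show "\<forall>w\<in>verts G. \<forall>p s r. p \<in> nbhd G w \<and> s \<in> nbhd G w \<and> r \<in> nbhd G w \<and> nbhd G p \<noteq> nbhd G s \<and>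
       nbhd G p \<noteq> nbhd G r \<and> nbhd G s \<noteq> nbhd G r \<longrightarrow> False"
    using c[THEN conjunct2, THEN conjunct2, THEN conjunct2, THEN conjunct2] by (rule conjunct1)
  show "\<forall>p\<in>verts G. (\<forall>s\<in>verts G. s \<noteq> p \<longrightarrow> nbhd G s \<noteq> nbhd G p) \<longrightarrow> card (nbhd G p) = 2"
    using c[THEN conjunct2, THEN conjunct2, THEN conjunct2, THEN conjunct2, THEN conjunct2] by (rule conjunct1)
  show "\<forall>p\<in>verts G. 2 \<le> card (nbhd G p)"
    using c[THEN conjunct2, THEN conjunct2, THEN conjunct2, THEN conjunct2, THEN conjunct2, THEN conjunct2] by (rule conjunct1)
  show "\<forall>p s r c d. p \<in> verts G \<and> s \<in> verts G \<and> r \<in> verts G \<and> p \<noteq> s \<and> p \<noteq> r \<and> s \<noteq> r \<and>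
       s \<notin> nbhd G p \<and> r \<notin> nbhd G p \<and> r \<notin> nbhd G s \<and> c \<noteq> d \<and>
       nbhd G p \<inter> nbhd G s = {c,d} \<and> nbhd G p \<inter> nbhd G r = {c,d} \<and> nbhd G s \<inter> nbhd G r = {c,d} \<longrightarrow> False"
    using c[THEN conjunct2, THEN conjunct2, THEN conjunct2, THEN conjunct2, THEN conjunct2, THEN conjunct2, THEN conjunct2] by (rule conjunct1)
  show "\<forall>b\<in>verts G. (\<lambda>s t. t \<in> nbhd G s)\<^sup>*\<^sup>* x b"
    using c[THEN conjunct2, THEN conjunct2, THEN conjunct2, THEN conjunct2, THEN conjunct2, THEN conjunct2, THEN conjunct2, THEN conjunct2] .
qed

lemma AL:
  fixes x1 y1 x2 y2 x3 y3 :: real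
  assumes "x1 \<noteq> 0" "y2 \<noteq> 0" "y3 \<noteq> 0"
    and e1: "x1 * x2 + y1 * y2 = 0" and e2: "x1 * x3 + y1 * y3 = 0" and e3: "x2 * x3 + y2 * y3 = 0"
  shows False
proof -
  have h1: "x1 * x2 = - (y1 * y2)" using e1 by linarith
  have h2: "x1 * x3 = - (y1 * y3)" using e2 by linarith
  have "(y2 * y3) * (y1 * y1 + x1 * x1) = (y1 * y2) * (y1 * y3) + x1 * x1 * y2 * y3" by (simp add: algebra_simps)
  also have "\<dots> = (x1 * x2) * (x1 * x3) + x1 * x1 * y2 * y3" by (simp only: h1 h2) simp
  also have "\<dots> = x1 * x1 * (x2 * x3 + y2 * y3)" by (simp add: algebra_simps)
  also have "\<dots> = 0" using e3 by simp
  finally have "(y2 * y3) * (y1 * y1 + x1 * x1) = 0" .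
  moreover have "y1 * y1 + x1 * x1 > 0"
  proof -
    have "x1 * x1 > 0" using assms(1) linorder_neq_iff[of x1 0] by (auto simp: zero_less_mult_iff)
    moreover have "y1 * y1 \<ge> 0" by simp
    ultimately show ?thesis by linarith
  qed
  ultimately show False using assms(2,3) by simp
qed

lemma sgA:
  assumes sg: "simple_graph G" and A: "A \<in> SG G" and ij: "i \<in> verts G" "j \<in> verts G" "i \<noteq> j"
  shows "(A i j \<noteq> 0) = (j \<in> nbhd G i)"
  using A ij nb_edge[OF sg, of i j] unfolding SG_def by auto

lemma OL:
  assumes sg: "simple_graph G" and A: "A \<in> SG G"
    and O: "\<forall>i\<in>verts G. \<forall>j\<in>verts G. i \<noteq> j \<longrightarrow> {i,j} \<notin> edges G \<longrightarrow> (\<Sum>k\<in>verts G. A i k * A k j) = 0"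
    and ps: "p \<in> verts G" "s \<in> verts G" "p \<noteq> s" "s \<notin> nbhd G p" and I: "nbhd G p \<inter> nbhd G s = {c,d}" "c \<noteq> d"
  shows "A p c * A s c + A p d * A s d = 0"
proof -
  have sym: "\<And>i j. A i j = A j i" using A unfolding SG_def by auto
  have ne: "{p,s} \<notin> edges G" using nb_edge[OF sg, of p s] ps by simp
  have S0: "(\<Sum>k\<in>verts G. A p k * A k s) = 0" using O ps ne by blast
  have cdV: "{c,d} \<subseteq> verts G" using I nb_sub[of G p] by blast
  have Aps: "A p s = 0" using sgA[OF sg A ps(1,2,3)] ps(4) by simp
  have "(\<Sum>k\<in>{c,d}. A p k * A k s) = (\<Sum>k\<in>verts G. A p k * A k s)"
  proof (rule sum.mono_neutral_left)
    show "finite (verts G)" using sg_fin[OF sg] .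
    show "{c,d} \<subseteq> verts G" by fact
    show "\<forall>k\<in>verts G - {c,d}. A p k * A k s = 0"
    proof
      fix k assume k: "k \<in> verts G - {c,d}"
      show "A p k * A k s = 0"
      proof (cases "k = p \<or> k = s")
        case True then show ?thesis using Aps sym[of s p] by auto
      next
        case False
        have "k \<notin> nbhd G p \<or> k \<notin> nbhd G s" using k I by blast
        then have "A p k = 0 \<or> A s k = 0" using sgA[OF sg A ps(1), of k] sgA[OF sg A ps(2), of k] k False by auto
        then show ?thesis using sym[of k s] by auto
      qed
    qed
  qed
  then show ?thesis using S0 I(2) sym[of c s] sym[of d s] by simp
qed

lemma eq2: "finite B \<Longrightarrow> {w, w'} \<subseteq> B \<Longrightarrow> w \<noteq> w' \<Longrightarrow> card B \<le> 2 \<Longrightarrow> B = {w, w'}"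
proof -
  assume f: "finite B" and sub: "{w, w'} \<subseteq> B" and ne: "w \<noteq> w'" and c: "card B \<le> 2"
  have "card {w,w'} = 2" using ne by simp
  moreover have "card {w,w'} \<le> card B" using card_mono[OF f sub] .
  ultimately have "card {w,w'} = card B" using c by simp
  then show ?thesis using card_subset_eq[OF f sub] by simp
qed

lemma zinv_from:
  assumes fG: "finv G" and A: "A \<in> SG G"
    and O: "\<forall>i\<in>verts G. \<forall>j\<in>verts G. i \<noteq> j \<longrightarrow> {i,j} \<notin> edges G \<longrightarrow> (\<Sum>k\<in>verts G. A i k * A k j) = 0"
  shows "\<exists>x. zinv G x"
proof -
  have sg: "simple_graph G" using finv_sg[OF fG] .
  note I4 = finv4[OF fG, rule_format]
  note I5 = finv5[OF fG, rule_format]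
  note I6 = finv6[OF fG, rule_format]
  note I7 = finv7[OF fG, rule_format]
  note I8 = finv8[OF fG, rule_format]
  note I9 = finv9[OF fG, rule_format]
  obtain x where xV: "x \<in> verts G" and x1: "\<exists>u v. u \<noteq> v \<and> nbhd G x = {u,v} \<and> nbhd G u = nbhd G v"
    using finv10[OF fG] by blast
  have nzA: "A p c \<noteq> 0" if "c \<in> nbhd G p" for p c
  proof -
    have "p \<in> verts G" "c \<in> verts G" using that nb_V2[OF sg] nb_V by metis+
    moreover have "p \<noteq> c" using that nb_irr[OF sg] by metis
    ultimately show ?thesis using sgA[OF sg A, of p c] that by simp
  qed
  have TL: False if V: "p \<in> verts G" "s \<in> verts G" "r \<in> verts G" and d: "p \<noteq> s" "p \<noteq> r" "s \<noteq> r"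
      and na: "s \<notin> nbhd G p" "r \<notin> nbhd G p" "r \<notin> nbhd G s" and cd: "c \<noteq> d"
      and i1: "nbhd G p \<inter> nbhd G s = {c,d}" and i2: "nbhd G p \<inter> nbhd G r = {c,d}"
      and i3: "nbhd G s \<inter> nbhd G r = {c,d}" for p s r c d
  proof -
    have e1: "A p c * A s c + A p d * A s d = 0" by (rule OL[OF sg A O V(1,2) d(1) na(1) i1 cd])
    have e2: "A p c * A r c + A p d * A r d = 0" by (rule OL[OF sg A O V(1,3) d(2) na(2) i2 cd])
    have e3: "A s c * A r c + A s d * A r d = 0" by (rule OL[OF sg A O V(2,3) d(3) na(3) i3 cd])
    have "c \<in> nbhd G p" "d \<in> nbhd G s" "d \<in> nbhd G r" using i1 i2 i3 by blast+
    then have "A p c \<noteq> 0" "A s d \<noteq> 0" "A r d \<noteq> 0" using nzA by blast+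
    then show False using AL e1 e2 e3 by blast
  qed
  have Z2: "\<forall>p\<in>verts G. \<forall>s\<in>verts G. \<forall>r\<in>verts G. p \<noteq> s \<and> p \<noteq> r \<and> s \<noteq> r \<and> nbhd G p = nbhd G s \<and> nbhd G p = nbhd G r \<longrightarrow> False"
  proof (intro ballI impI)
    fix p s r assume V: "p \<in> verts G" "s \<in> verts G" "r \<in> verts G"
      and h: "p \<noteq> s \<and> p \<noteq> r \<and> s \<noteq> r \<and> nbhd G p = nbhd G s \<and> nbhd G p = nbhd G r"
    obtain a b where ab: "a \<noteq> b" "nbhd G p = {a,b}" using I4[OF V h] by blast
    have na: "s \<notin> nbhd G p" "r \<notin> nbhd G p" "r \<notin> nbhd G s"
      using h twins_nonadj[OF sg] by metis+
    show False using TL[OF V _ _ _ na ab(1)] h ab(2) by auto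
  qed
  have Z3: "\<forall>w\<in>verts G. \<forall>p s r. p \<in> nbhd G w \<and> s \<in> nbhd G w \<and> r \<in> nbhd G w \<and> nbhd G p \<noteq> nbhd G s \<and>
       nbhd G p \<noteq> nbhd G r \<and> nbhd G s \<noteq> nbhd G r \<longrightarrow> False"
  proof (intro ballI allI impI)
    fix w p s r assume wV: "w \<in> verts G" and h: "p \<in> nbhd G w \<and> s \<in> nbhd G w \<and> r \<in> nbhd G w \<and> nbhd G p \<noteq> nbhd G s \<and>
       nbhd G p \<noteq> nbhd G r \<and> nbhd G s \<noteq> nbhd G r"
    have d: "p \<noteq> s" "p \<noteq> r" "s \<noteq> r" using h by auto
    have V: "p \<in> verts G" "s \<in> verts G" "r \<in> verts G" using h nb_V by metis+
    show False
    proof (cases "\<exists>w'\<in>verts G. w' \<noteq> w \<and> nbhd G w' = nbhd G w")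
      case True
      then obtain w' where w': "w' \<in> verts G" "w' \<noteq> w" "nbhd G w' = nbhd G w" by blast
      have na: "s \<notin> nbhd G p" "r \<notin> nbhd G p" "r \<notin> nbhd G s" using h I7 by metis+
      have inc: "w \<in> nbhd G t" "w' \<in> nbhd G t" if "t \<in> nbhd G w" for t
        using that w'(3) nb_symD[OF sg] by metis+
      have int: "nbhd G t1 \<inter> nbhd G t2 = {w, w'}"
        if "t1 \<in> nbhd G w" "t2 \<in> nbhd G w" "t1 \<noteq> t2" "t2 \<notin> nbhd G t1" "nbhd G t1 \<noteq> nbhd G t2" for t1 t2
      proof (rule eq2)
        show "finite (nbhd G t1 \<inter> nbhd G t2)" using nb_fin[OF sg] by blast
        show "{w, w'} \<subseteq> nbhd G t1 \<inter> nbhd G t2" using inc that by blast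
        show "w \<noteq> w'" using w' by simp
        show "card (nbhd G t1 \<inter> nbhd G t2) \<le> 2"
          using I6 that nb_V by metis
      qed
      show False
        using TL[OF V d na w'(2)[symmetric]] int[of p s] int[of p r] int[of s r] h d na by auto
    next
      case False
      then obtain a b where "nbhd G w = {a,b}" using I5[OF wV] by blast
      then show False using h d by auto
    qed
  qed
  have Z4: "\<forall>p\<in>verts G. (\<forall>s\<in>verts G. s \<noteq> p \<longrightarrow> nbhd G s \<noteq> nbhd G p) \<longrightarrow> card (nbhd G p) = 2"
  proof (intro ballI impI)
    fix p assume "p \<in> verts G" "\<forall>s\<in>verts G. s \<noteq> p \<longrightarrow> nbhd G s \<noteq> nbhd G p"
    then obtain a b where "a \<noteq> b" "nbhd G p = {a,b}" using I5 by blast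
    then show "card (nbhd G p) = 2" by simp
  qed
  have Z5: "\<forall>p\<in>verts G. 2 \<le> card (nbhd G p)" using I8 by blast
  have ZC: "\<forall>p s r c d. p \<in> verts G \<and> s \<in> verts G \<and> r \<in> verts G \<and> p \<noteq> s \<and> p \<noteq> r \<and> s \<noteq> r \<and>
       s \<notin> nbhd G p \<and> r \<notin> nbhd G p \<and> r \<notin> nbhd G s \<and> c \<noteq> d \<and>
       nbhd G p \<inter> nbhd G s = {c,d} \<and> nbhd G p \<inter> nbhd G r = {c,d} \<and> nbhd G s \<inter> nbhd G r = {c,d} \<longrightarrow> False"
    using TL by blast
  have Z9: "\<forall>b\<in>verts G. (\<lambda>s t. t \<in> nbhd G s)\<^sup>*\<^sup>* x b" using I9 xV by blast
  have "zinv G x" unfolding zinv_def by (intro conjI sg xV x1 Z2 Z3 Z4 Z5 ZC Z9)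
  then show ?thesis by blast
qed





lemma cand_verts: "verts (candle k) = {1..2*k}" unfolding candle_def verts_def by simp

lemma cand_edge: "({i,j} \<in> edges (candle k)) = (i \<in> {1..2*k} \<and> j \<in> {1..2*k} \<and>
    (candle_level k j = candle_level k i + 1 \<or> candle_level k i = candle_level k j + 1))"
  unfolding candle_def edges_def by (auto simp: doubleton_eq_iff)

lemma cand_loop: "{i} \<notin> edges (candle k)"
  using cand_edge[of i i k] by simp

lemma cl1: "k \<ge> 2 \<Longrightarrow> j \<in> {1..2*k} \<Longrightarrow> ({1,j} \<in> edges (candle k)) = (j = 2 \<or> j = 3)"
  unfolding cand_edge candle_level_def by auto

lemma cl2: "k \<ge> 3 \<Longrightarrow> j \<in> {1..2*k} \<Longrightarrow> ({2,j} \<in> edges (candle k)) = (j = 1 \<or> j = 4 \<or> j = 5)"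
  unfolding cand_edge candle_level_def by auto

lemma cl_shift: "k \<ge> 2 \<Longrightarrow> i \<in> {1..2*k} \<Longrightarrow> candle_level (Suc k) (i + 2) = candle_level k i + 1"
  unfolding candle_level_def by auto

lemma cand_shift: "k \<ge> 2 \<Longrightarrow> i \<in> {1..2*k} \<Longrightarrow> j \<in> {1..2*k} \<Longrightarrow>
    ({i+2, j+2} \<in> edges (candle (Suc k))) = ({i,j} \<in> edges (candle k))"
  unfolding cand_edge using cl_shift[of k i] cl_shift[of k j] by auto

lemma four: "i \<in> {1..4::nat} \<Longrightarrow> i = 1 \<or> i = 2 \<or> i = 3 \<or> i = 4" by auto

lemma cand2: "i \<in> {1..4} \<Longrightarrow> j \<in> {1..4} \<Longrightarrow> ({i,j} \<in> edges (candle 2)) =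
   ((i = 1 \<and> (j = 2 \<or> j = 3)) \<or> (j = 1 \<and> (i = 2 \<or> i = 3)) \<or> (i = 4 \<and> (j = 2 \<or> j = 3)) \<or> (j = 4 \<and> (i = 2 \<or> i = 3)))"
  apply (frule four, drule four[of j])
  apply (elim disjE)
  apply (simp_all add: cand_edge candle_level_def cand_loop)
  done



lemma zinv_R:
  assumes Z: "zinv G x" and uv: "u \<noteq> v" and Nx: "nbhd G x = {u,v}" and tw: "nbhd G u = nbhd G v"
  shows "(\<exists>y. y \<noteq> x \<and> nbhd G u = {x,y}) \<or>
         (\<exists>a b. a \<noteq> b \<and> a \<noteq> x \<and> b \<noteq> x \<and> nbhd G u = {x,a,b} \<and> nbhd G a = nbhd G b)"
proof -
  have sg: "simple_graph G" using zinv_sg[OF Z] .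
  have xV: "x \<in> verts G" using zinv_x[OF Z] .
  note Z2 = zinv2[OF Z, rule_format]
  note Z3 = zinv3[OF Z, rule_format]
  note Z5 = zinv5[OF Z, rule_format]
  note ZC = zinvC[OF Z, rule_format]
  have uV: "u \<in> verts G" "v \<in> verts G" using Nx nb_sub[of G x] by auto
  have xu: "x \<in> nbhd G u" "x \<in> nbhd G v" using Nx nb_symD[OF sg, of u x] nb_symD[OF sg, of v x] by auto
  define R where "R = nbhd G u - {x}"
  have Ru: "nbhd G u = insert x R" using xu R_def by auto
  have Rf: "r \<in> verts G" "r \<noteq> x" "r \<noteq> u" "r \<noteq> v" "u \<in> nbhd G r" "v \<in> nbhd G r" "r \<notin> nbhd G x"
    if "r \<in> R" for r
  proof -
    show "r \<in> verts G" using that R_def nb_V by fastforce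
    show "r \<noteq> x" using that R_def by auto
    show "r \<noteq> u" using that R_def nb_irr[OF sg, of u] by auto
    show "r \<noteq> v" using that R_def nb_irr[OF sg, of v] tw by auto
    show "u \<in> nbhd G r" using that R_def nb_symD[OF sg, of r u] by auto
    show "v \<in> nbhd G r" using that R_def tw nb_symD[OF sg, of r v] by auto
    show "r \<notin> nbhd G x" using Nx \<open>r \<noteq> u\<close> \<open>r \<noteq> v\<close> by auto
  qed
  have R2: "nbhd G r1 = nbhd G r2" if r: "r1 \<in> R" "r2 \<in> R" for r1 r2
  proof (rule ccontr)
    assume ne: "nbhd G r1 \<noteq> nbhd G r2"
    have i: "nbhd G x \<inter> nbhd G r1 = {u,v}" "nbhd G x \<inter> nbhd G r2 = {u,v}"
      using Nx Rf(5,6)[OF r(1)] Rf(5,6)[OF r(2)] by auto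
    show False
    proof (cases "nbhd G x = nbhd G r1 \<or> nbhd G x = nbhd G r2")
      case True
      then show False
      proof
        assume e: "nbhd G x = nbhd G r1"
        have "r2 \<notin> nbhd G r1" using e Nx Rf(3,4)[OF r(2)] by auto
        moreover have "nbhd G r1 \<inter> nbhd G r2 = {u,v}" using e i by simp
        ultimately show False
          using ZC[of x r1 r2 u v] xV Rf(1,2,7)[OF r(1)] Rf(1,2,7)[OF r(2)] ne uv i by auto
      next
        assume e: "nbhd G x = nbhd G r2"
        have "r1 \<notin> nbhd G r2" using e Nx Rf(3,4)[OF r(1)] by auto
        then have "r2 \<notin> nbhd G r1" using nb_symD[OF sg, of r2 r1] by auto
        moreover have "nbhd G r1 \<inter> nbhd G r2 = {u,v}" using e i by auto
        ultimately show False
          using ZC[of x r1 r2 u v] xV Rf(1,2,7)[OF r(1)] Rf(1,2,7)[OF r(2)] ne uv i by auto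
      qed
    next
      case False
      then show False using Z3[OF uV(1), of x r1 r2] xu r R_def ne by auto
    qed
  qed
  have R3: False if "r1 \<in> R" "r2 \<in> R" "r3 \<in> R" "r1 \<noteq> r2" "r1 \<noteq> r3" "r2 \<noteq> r3" for r1 r2 r3
    using Z2[of r1 r2 r3] that Rf R2 by blast
  have "R \<noteq> {}"
  proof
    assume "R = {}"
    then have "card (nbhd G u) = 1" using Ru by simp
    then show False using Z5[OF uV(1)] by simp
  qed
  then obtain y where y: "y \<in> R" by blast
  show ?thesis
  proof (cases "R = {y}")
    case True
    then show ?thesis using Ru Rf(2)[OF y] by blast
  next
    case False
    then obtain b where b: "b \<in> R" "b \<noteq> y" using y by blast
    have "R = {y,b}" using R3[OF y b(1)] y b by blast
    then show ?thesis using Ru Rf(2)[OF y] Rf(2)[OF b(1)] b R2[OF y b(1)] by blast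
  qed
qed

lemma zinv_base:
  assumes Z: "zinv G x" and uv: "u \<noteq> v" and Nx: "nbhd G x = {u,v}" and tw: "nbhd G u = nbhd G v"
    and y: "y \<noteq> x" and Nu: "nbhd G u = {x,y}"
  shows "\<exists>f. bij_betw f (verts G) {1..2*2} \<and> f x = 1 \<and>
     (\<forall>a\<in>verts G. \<forall>b\<in>verts G. ({a,b} \<in> edges G) = ({f a, f b} \<in> edges (candle 2)))"
proof -
  have sg: "simple_graph G" using zinv_sg[OF Z] .
  have xV: "x \<in> verts G" using zinv_x[OF Z] .
  note Z4 = zinv4[OF Z, rule_format]
  note Z9 = zinv9[OF Z, rule_format]
  have uV: "u \<in> verts G" "v \<in> verts G" using Nx nb_sub[of G x] by auto
  have yN: "y \<in> nbhd G u" "y \<in> nbhd G v" using Nu tw by auto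
  have yV: "y \<in> verts G" using yN nb_V by metis
  have Nv: "nbhd G v = {x,y}" using Nu tw by simp
  have uy: "u \<in> nbhd G y" "v \<in> nbhd G y" using yN nb_symD[OF sg] by metis+
  have Ny: "nbhd G y = {u,v}"
  proof (cases "\<exists>t\<in>verts G. t \<noteq> y \<and> nbhd G t = nbhd G y")
    case True
    then obtain t where t: "t \<in> verts G" "t \<noteq> y" "nbhd G t = nbhd G y" by blast
    then have "u \<in> nbhd G t" using uy by simp
    then have "t \<in> nbhd G u" using nb_symD[OF sg] by metis
    then have "t = x" using Nu t(2) by simp
    then show ?thesis using t(3) Nx by simp
  next
    case False
    then have "card (nbhd G y) = 2" using Z4[OF yV] by metis
    moreover have "{u,v} \<subseteq> nbhd G y" using uy by simp
    ultimately show ?thesis using eq2[of "nbhd G y" u v] nb_fin[OF sg, of y] uv by simp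
  qed
  have d: "x \<noteq> u" "x \<noteq> v" "y \<noteq> u" "y \<noteq> v"
    using Nx Nu Nv nb_irr[OF sg, of x] nb_irr[OF sg, of u] nb_irr[OF sg, of v] by auto
  have V: "verts G = {x,u,v,y}"
  proof
    show "{x,u,v,y} \<subseteq> verts G" using xV uV yV by simp
    show "verts G \<subseteq> {x,u,v,y}"
    proof
      fix b assume "b \<in> verts G"
      then have "(\<lambda>s t. t \<in> nbhd G s)\<^sup>*\<^sup>* x b" using Z9 by blast
      then show "b \<in> {x,u,v,y}"
      proof (induction rule: rtranclp_induct)
        case base then show ?case by simp
      next
        case (step s t)
        then show ?case using Nx Nu Nv Ny by auto
      qed
    qed
  qed
  define f where "f w = (if w = x then 1 else if w = u then 2 else if w = v then 3 else (4::nat))" for w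
  have fx: "f x = 1" "f u = 2" "f v = 3" "f y = 4" unfolding f_def using d uv y by auto
  have bij: "bij_betw f (verts G) {1..2*2}"
  proof (rule bij_betw_imageI)
    show "inj_on f (verts G)" unfolding V inj_on_def using fx by auto
    have "{1..2*2::nat} = {1,2,3,4}" by auto
    then show "f ` verts G = {1..2*2}" unfolding V using fx by auto
  qed
  have fr: "f a \<in> {1..4}" if "a \<in> verts G" for a using that V fx by auto
  have ed: "({a,b} \<in> edges G) = ({f a, f b} \<in> edges (candle 2))" if ab: "a \<in> verts G" "b \<in> verts G" for a b
  proof -
    have "({a,b} \<in> edges G) = (b \<in> nbhd G a)" by (rule nb_edge[OF sg])
    also have "({f a, f b} \<in> edges (candle 2)) = ((f a = 1 \<and> (f b = 2 \<or> f b = 3)) \<or> (f b = 1 \<and> (f a = 2 \<or> f a = 3)) \<or> (f a = 4 \<and> (f b = 2 \<or> f b = 3)) \<or> (f b = 4 \<and> (f a = 2 \<or> f a = 3)))"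
      using cand2[OF fr[OF ab(1)] fr[OF ab(2)]] .
    moreover have "(b \<in> nbhd G a) = ((f a = 1 \<and> (f b = 2 \<or> f b = 3)) \<or> (f b = 1 \<and> (f a = 2 \<or> f a = 3)) \<or> (f a = 4 \<and> (f b = 2 \<or> f b = 3)) \<or> (f b = 4 \<and> (f a = 2 \<or> f a = 3)))"
      using ab unfolding V using fx Nx Nu Nv Ny d uv y by auto
    ultimately show ?thesis by simp
  qed
  show ?thesis using bij fx ed by blast
qed



lemma zinv_step:
  assumes Z: "zinv G x" and uv: "u \<noteq> v" and Nx: "nbhd G x = {u,v}" and tw: "nbhd G u = nbhd G v"
    and ab: "a \<noteq> b" "a \<noteq> x" "b \<noteq> x" and Nu: "nbhd G u = {x,a,b}" and tab: "nbhd G a = nbhd G b"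
  shows "zinv (delete_vertex (delete_vertex G x) u) v"
proof -
  define G' where "G' = delete_vertex (delete_vertex G x) u"
  have sg: "simple_graph G" using zinv_sg[OF Z] .
  have xV: "x \<in> verts G" using zinv_x[OF Z] .
  note Z2 = zinv2[OF Z, rule_format]
  note Z3 = zinv3[OF Z, rule_format]
  note Z4 = zinv4[OF Z, rule_format]
  note Z5 = zinv5[OF Z, rule_format]
  note ZC = zinvC[OF Z, rule_format]
  note Z9 = zinv9[OF Z, rule_format]
  have sg': "simple_graph G'" unfolding G'_def by (intro del_simple sg)
  have V': "verts G' = verts G - {x} - {u}" unfolding G'_def by (simp add: del_verts)
  have hN': "nbhd G' w = nbhd G w - {x} - {u}" if "w \<noteq> x" "w \<noteq> u" for w
    unfolding G'_def using that by (simp add: del_nb)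
  have uV: "u \<in> verts G" "v \<in> verts G" using Nx nb_sub[of G x] by auto
  have d: "x \<noteq> u" "x \<noteq> v" using Nx nb_irr[OF sg, of x] by auto
  have Nv: "nbhd G v = {x,a,b}" using Nu tw by simp
  have abN: "a \<in> nbhd G u" "b \<in> nbhd G u" "a \<in> nbhd G v" "b \<in> nbhd G v" using Nu Nv by auto
  have abV: "a \<in> verts G" "b \<in> verts G" using abN nb_V by metis+
  have abd: "a \<noteq> u" "b \<noteq> u" "a \<noteq> v" "b \<noteq> v"
    using abN nb_irr[OF sg, of u] nb_irr[OF sg, of v] by metis+
  have xin: "(x \<in> nbhd G w) = (w = u \<or> w = v)" for w
    using nb_sym[OF sg, of x w] Nx by simp
  have uin: "(u \<in> nbhd G w) = (w = x \<or> w = a \<or> w = b)" for w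
    using nb_sym[OF sg, of u w] Nu by simp
  have vin: "(v \<in> nbhd G w) = (w = x \<or> w = a \<or> w = b)" for w
    using nb_sym[OF sg, of v w] Nv by simp
  have inV': "(w \<in> verts G') = (w \<in> verts G \<and> w \<noteq> x \<and> w \<noteq> u)" for w using V' by auto
  have vV': "v \<in> verts G'" "a \<in> verts G'" "b \<in> verts G'" using inV' uV abV d abd ab uv by auto
  have N'v: "nbhd G' v = {a,b}"
  proof -
    have "nbhd G' v = nbhd G v - {x} - {u}" using hN'[of v] d uv by auto
    then show ?thesis using Nv ab abd by auto
  qed
  have Nrec: "nbhd G w = nbhd G' w \<union> (if w = v then {x} else {}) \<union> (if w = a \<or> w = b then {u} else {})"
    if "w \<in> verts G'" for w
  proof -
    have w: "w \<noteq> x" "w \<noteq> u" using that inV' by auto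
    show ?thesis using hN'[OF w] xin[of w] uin[of w] w by auto
  qed
  have vN': "(v \<in> nbhd G' w) = (w = a \<or> w = b)" if "w \<in> verts G'" for w
  proof -
    have w: "w \<noteq> x" "w \<noteq> u" using that inV' by auto
    show ?thesis using hN'[OF w] vin[of w] d uv w by auto
  qed
  have nxu: "x \<notin> nbhd G' w" "u \<notin> nbhd G' w" for w
    using nb_sub[of G' w] inV' by blast+
  have N'a: "nbhd G' a = nbhd G' b" using hN'[of a] hN'[of b] ab abd tab by simp
  have TW: "nbhd G p = nbhd G s \<or> (p = v \<and> nbhd G s = {a,b}) \<or> (s = v \<and> nbhd G p = {a,b})"
    if ps: "p \<in> verts G'" "s \<in> verts G'" and e: "nbhd G' p = nbhd G' s" for p s
  proof -
    have Np: "nbhd G p = nbhd G' p \<union> (if p = v then {x} else {}) \<union> (if p = a \<or> p = b then {u} else {})"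
      by (rule Nrec[OF ps(1)])
    have Ns: "nbhd G s = nbhd G' s \<union> (if s = v then {x} else {}) \<union> (if s = a \<or> s = b then {u} else {})"
      by (rule Nrec[OF ps(2)])
    show ?thesis
    proof (cases "p = v")
      case pv: True
      show ?thesis
      proof (cases "s = v")
        case True then show ?thesis using pv by simp
      next
        case sv: False
        have "\<not> (s = a \<or> s = b)"
        proof
          assume "s = a \<or> s = b"
          then have "v \<in> nbhd G' s" using vN'[OF ps(2)] by simp
          then show False using e pv N'v abd by auto
        qed
        then have "nbhd G s = {a,b}" using Ns sv e pv N'v by simp
        then show ?thesis using pv by simp
      qed
    next
      case pv: False
      show ?thesis
      proof (cases "s = v")
        case sv: True
        have "\<not> (p = a \<or> p = b)"
        proof
          assume "p = a \<or> p = b"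
          then have "v \<in> nbhd G' p" using vN'[OF ps(1)] by simp
          then show False using e sv N'v abd by auto
        qed
        then have "nbhd G p = {a,b}" using Np pv e sv N'v by simp
        then show ?thesis using sv by simp
      next
        case sv: False
        have "(p = a \<or> p = b) = (s = a \<or> s = b)"
          using vN'[OF ps(1)] vN'[OF ps(2)] e by simp
        then show ?thesis using Np Ns pv sv e by simp
      qed
    qed
  qed
  have Wu: "w1 = w2" if w: "w1 \<in> verts G" "w2 \<in> verts G" "nbhd G w1 = {a,b}" "nbhd G w2 = {a,b}" for w1 w2
  proof (rule ccontr)
    assume ne: "w1 \<noteq> w2"
    have nw: "w \<noteq> x" "w \<noteq> a" "w \<noteq> b" "w \<noteq> u" if "nbhd G w = {a,b}" for w
    proof -
      show "w \<noteq> x" using that Nx abd by auto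
      show "w \<noteq> a" using that nb_irr[OF sg, of a] by auto
      show "w \<noteq> b" using that nb_irr[OF sg, of b] by auto
      show "w \<noteq> u" using that Nu ab by auto
    qed
    show False
      using ZC[of u w1 w2 a b] uV(1) w ne nw[OF w(3)] nw[OF w(4)] Nu ab by auto
  qed
  have H1: "nbhd G t = {a,b}" if t: "t \<in> verts G'" "t \<noteq> v" "nbhd G' t = nbhd G' v" for t
  proof -
    have tu: "t \<in> verts G" "t \<noteq> u" using t inV' by auto
    from TW[OF vV'(1) t(1) t(3)[symmetric]] t(2) show ?thesis
    proof (elim disjE)
      assume "nbhd G v = nbhd G t"
      then show ?thesis using Z2[of t u v] tu t(2) uV uv tw by auto
    qed auto
  qed
  have H2: "nbhd G p = nbhd G s" if "p \<in> verts G'" "s \<in> verts G'" "p \<noteq> v" "s \<noteq> v" "nbhd G' p = nbhd G' s" for p s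
    using TW that by blast
  have Z2': "\<forall>p\<in>verts G'. \<forall>s\<in>verts G'. \<forall>r\<in>verts G'. p \<noteq> s \<and> p \<noteq> r \<and> s \<noteq> r \<and> nbhd G' p = nbhd G' s \<and> nbhd G' p = nbhd G' r \<longrightarrow> False"
  proof (intro ballI impI)
    fix p s r assume V: "p \<in> verts G'" "s \<in> verts G'" "r \<in> verts G'"
      and h: "p \<noteq> s \<and> p \<noteq> r \<and> s \<noteq> r \<and> nbhd G' p = nbhd G' s \<and> nbhd G' p = nbhd G' r"
    have VG: "p \<in> verts G" "s \<in> verts G" "r \<in> verts G" using V inV' by auto
    show False
    proof (cases "p = v \<or> s = v \<or> r = v")
      case True
      then show False
      proof (elim disjE)
        assume "p = v"
        then have "nbhd G s = {a,b}" "nbhd G r = {a,b}" using H1[of s] H1[of r] V h by auto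
        then show False using Wu[of s r] VG h by auto
      next
        assume "s = v"
        then have "nbhd G p = {a,b}" "nbhd G r = {a,b}" using H1[of p] H1[of r] V h by auto
        then show False using Wu[of p r] VG h by auto
      next
        assume "r = v"
        then have "nbhd G p = {a,b}" "nbhd G s = {a,b}" using H1[of p] H1[of s] V h by auto
        then show False using Wu[of p s] VG h by auto
      qed
    next
      case False
      then have "nbhd G p = nbhd G s" "nbhd G p = nbhd G r" using H2 V h by blast+
      then show False using Z2[OF VG] h by blast
    qed
  qed
  have Z3': "\<forall>w\<in>verts G'. \<forall>p s r. p \<in> nbhd G' w \<and> s \<in> nbhd G' w \<and> r \<in> nbhd G' w \<and> nbhd G' p \<noteq> nbhd G' s \<and>
       nbhd G' p \<noteq> nbhd G' r \<and> nbhd G' s \<noteq> nbhd G' r \<longrightarrow> False"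
  proof (intro ballI allI impI)
    fix w p s r assume wV: "w \<in> verts G'" and h: "p \<in> nbhd G' w \<and> s \<in> nbhd G' w \<and> r \<in> nbhd G' w \<and> nbhd G' p \<noteq> nbhd G' s \<and>
       nbhd G' p \<noteq> nbhd G' r \<and> nbhd G' s \<noteq> nbhd G' r"
    have w: "w \<in> verts G" "w \<noteq> x" "w \<noteq> u" using wV inV' by auto
    have V: "p \<in> verts G'" "s \<in> verts G'" "r \<in> verts G'" using h nb_V by metis+
    have pp: "p \<noteq> x" "p \<noteq> u" "s \<noteq> x" "s \<noteq> u" "r \<noteq> x" "r \<noteq> u" using V inV' by auto
    have "nbhd G p \<noteq> nbhd G s" "nbhd G p \<noteq> nbhd G r" "nbhd G s \<noteq> nbhd G r"
      using h hN' pp by metis+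
    moreover have "p \<in> nbhd G w" "s \<in> nbhd G w" "r \<in> nbhd G w" using h hN'[OF w(2,3)] by auto
    ultimately show False using Z3[OF w(1)] by blast
  qed
  have Z4': "\<forall>p\<in>verts G'. (\<forall>s\<in>verts G'. s \<noteq> p \<longrightarrow> nbhd G' s \<noteq> nbhd G' p) \<longrightarrow> card (nbhd G' p) = 2"
  proof (intro ballI impI)
    fix p assume pV: "p \<in> verts G'" and nt: "\<forall>s\<in>verts G'. s \<noteq> p \<longrightarrow> nbhd G' s \<noteq> nbhd G' p"
    have p: "p \<in> verts G" "p \<noteq> x" "p \<noteq> u" using pV inV' by auto
    show "card (nbhd G' p) = 2"
    proof (cases "p = v")
      case True then show ?thesis using N'v ab by simp
    next
      case pv: False
      have pab: "p \<noteq> a" "p \<noteq> b" using nt vV' N'a ab by metis+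
      have "\<forall>t\<in>verts G. t \<noteq> p \<longrightarrow> nbhd G t \<noteq> nbhd G p"
      proof (intro ballI impI notI)
        fix t assume t: "t \<in> verts G" "t \<noteq> p" "nbhd G t = nbhd G p"
        show False
        proof (cases "t = x \<or> t = u")
          case True
          then show False
          proof
            assume "t = x"
            then have "u \<in> nbhd G p" using t Nx by auto
            then have "p = x \<or> p = a \<or> p = b" using uin by simp
            then show False using p pab by simp
          next
            assume "t = u"
            then have "nbhd G v = nbhd G p" using t tw by simp
            then have "nbhd G' v = nbhd G' p" using hN'[of v] hN'[of p] p d uv by simp
            then show False using nt[rule_format, OF vV'(1)] pv by auto
          qed
        next
          case False
          then have "t \<in> verts G'" using t inV' by auto
          moreover have "nbhd G' t = nbhd G' p" using hN'[of t] hN'[of p] p False t(3) by simp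
          ultimately show False using nt t(2) by blast
        qed
      qed
      then have "card (nbhd G p) = 2" using Z4[OF p(1)] by blast
      moreover have "nbhd G' p = nbhd G p" using Nrec[OF pV] pv pab by simp
      ultimately show ?thesis by simp
    qed
  qed
  have Z5': "\<forall>p\<in>verts G'. 2 \<le> card (nbhd G' p)"
  proof
    fix p assume pV: "p \<in> verts G'"
    have p: "p \<in> verts G" "p \<noteq> x" "p \<noteq> u" using pV inV' by auto
    show "2 \<le> card (nbhd G' p)"
    proof (cases "p = v")
      case True then show ?thesis using N'v ab by simp
    next
      case pv: False
      show ?thesis
      proof (cases "p = a \<or> p = b")
        case True
        have N'p: "nbhd G' p = nbhd G p - {u}" using Nrec[OF pV] pv True nxu[of p] by auto
        have uvp: "{u,v} \<subseteq> nbhd G p" using True uin vin by auto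
        have "card (nbhd G p) \<ge> 3"
        proof (rule ccontr)
          assume "\<not> card (nbhd G p) \<ge> 3"
          then have "card (nbhd G p) \<le> 2" by simp
          then have "nbhd G p = {u,v}" using eq2[OF nb_fin[OF sg] uvp uv] by simp
          then have "nbhd G a = nbhd G x" "nbhd G b = nbhd G x" using True tab Nx by auto
          then show False using Z2[of x a b] xV abV ab by auto
        qed
        moreover have "u \<in> nbhd G p" using uvp by simp
        ultimately show ?thesis using N'p nb_fin[OF sg, of p] by (simp add: card_Diff_singleton)
      next
        case False
        then have "nbhd G' p = nbhd G p" using Nrec[OF pV] pv by simp
        then show ?thesis using Z5[OF p(1)] by simp
      qed
    qed
  qed
  have Ieq: "nbhd G t1 \<inter> nbhd G t2 = nbhd G' t1 \<inter> nbhd G' t2"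
    if t: "t1 \<in> verts G'" "t2 \<in> verts G'" "t1 \<noteq> t2" "\<not> ((t1 = a \<or> t1 = b) \<and> (t2 = a \<or> t2 = b))" for t1 t2
  proof (rule Set.set_eqI)
    fix z
    have t1: "t1 \<noteq> x" "t1 \<noteq> u" and t2: "t2 \<noteq> x" "t2 \<noteq> u" using t(1,2) inV' by auto
    show "(z \<in> nbhd G t1 \<inter> nbhd G t2) = (z \<in> nbhd G' t1 \<inter> nbhd G' t2)"
    proof (cases "z = x")
      case True
      have "\<not> (x \<in> nbhd G t1 \<and> x \<in> nbhd G t2)" using xin[of t1] xin[of t2] t1 t2 t(3) by auto
      then show ?thesis using True nxu by auto
    next
      case zx: False
      show ?thesis
      proof (cases "z = u")
        case True
        have "\<not> (u \<in> nbhd G t1 \<and> u \<in> nbhd G t2)" using uin[of t1] uin[of t2] t1 t2 t(4) by auto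
        then show ?thesis using True nxu by auto
      next
        case False
        then show ?thesis using hN'[OF t1] hN'[OF t2] zx by auto
      qed
    qed
  qed
  have ZC': "\<forall>p s r c d. p \<in> verts G' \<and> s \<in> verts G' \<and> r \<in> verts G' \<and> p \<noteq> s \<and> p \<noteq> r \<and> s \<noteq> r \<and>
       s \<notin> nbhd G' p \<and> r \<notin> nbhd G' p \<and> r \<notin> nbhd G' s \<and> c \<noteq> d \<and>
       nbhd G' p \<inter> nbhd G' s = {c,d} \<and> nbhd G' p \<inter> nbhd G' r = {c,d} \<and> nbhd G' s \<inter> nbhd G' r = {c,d} \<longrightarrow> False"
  proof (intro allI impI)
    fix p s r c e assume h: "p \<in> verts G' \<and> s \<in> verts G' \<and> r \<in> verts G' \<and> p \<noteq> s \<and> p \<noteq> r \<and> s \<noteq> r \<and>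
       s \<notin> nbhd G' p \<and> r \<notin> nbhd G' p \<and> r \<notin> nbhd G' s \<and> c \<noteq> e \<and>
       nbhd G' p \<inter> nbhd G' s = {c,e} \<and> nbhd G' p \<inter> nbhd G' r = {c,e} \<and> nbhd G' s \<inter> nbhd G' r = {c,e}"
    then have V: "p \<in> verts G'" "s \<in> verts G'" "r \<in> verts G'" and dd: "p \<noteq> s" "p \<noteq> r" "s \<noteq> r"
      and nn: "s \<notin> nbhd G' p" "r \<notin> nbhd G' p" "r \<notin> nbhd G' s" and ce: "c \<noteq> e"
      and j1: "nbhd G' p \<inter> nbhd G' s = {c,e}" and j2: "nbhd G' p \<inter> nbhd G' r = {c,e}"
      and j3: "nbhd G' s \<inter> nbhd G' r = {c,e}" by blast+
    have VG: "p \<in> verts G" "s \<in> verts G" "r \<in> verts G" using V inV' by auto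
    have noab: False if t: "t1 \<in> verts G'" "t2 \<in> verts G'" "t3 \<in> verts G'" "t3 \<noteq> t1" "t3 \<noteq> t2"
       "t1 = a \<or> t1 = b" "t2 = a \<or> t2 = b" "t1 \<noteq> t2" "nbhd G' t1 \<inter> nbhd G' t2 = {c,e}" "nbhd G' t1 \<inter> nbhd G' t3 = {c,e}"
       for t1 t2 t3
    proof -
      have "v \<in> nbhd G' t1" "v \<in> nbhd G' t2" using vN'[OF t(1)] vN'[OF t(2)] t(6,7) by auto
      then have "v \<in> {c,e}" using t(9) by blast
      then have "v \<in> nbhd G' t3" using t(10) by blast
      then have "t3 = a \<or> t3 = b" using vN'[OF t(3)] by simp
      then show False using t(4,5,6,7,8) by blast
    qed
    have i1: "nbhd G p \<inter> nbhd G s = {c,e}"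
    proof -
      have "\<not> ((p = a \<or> p = b) \<and> (s = a \<or> s = b))"
        using noab[OF V(1) V(2) V(3) _ _ _ _ dd(1) j1 j2] dd by blast
      then show ?thesis using Ieq[OF V(1) V(2) dd(1)] j1 by simp
    qed
    have i2: "nbhd G p \<inter> nbhd G r = {c,e}"
    proof -
      have "\<not> ((p = a \<or> p = b) \<and> (r = a \<or> r = b))"
        using noab[OF V(1) V(3) V(2) _ _ _ _ dd(2) j2 j1] dd by blast
      then show ?thesis using Ieq[OF V(1) V(3) dd(2)] j2 by simp
    qed
    have j1': "nbhd G' s \<inter> nbhd G' p = {c,e}" using j1 by (simp add: Int_commute)
    have i3: "nbhd G s \<inter> nbhd G r = {c,e}"
    proof -
      have "\<not> ((s = a \<or> s = b) \<and> (r = a \<or> r = b))"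
        using noab[OF V(2) V(3) V(1) _ _ _ _ dd(3) j3 j1'] dd by blast
      then show ?thesis using Ieq[OF V(2) V(3) dd(3)] j3 by simp
    qed
    have ps: "p \<noteq> x" "p \<noteq> u" "s \<noteq> x" "s \<noteq> u" "r \<noteq> x" "r \<noteq> u" using V inV' by auto
    have na: "s \<notin> nbhd G p" "r \<notin> nbhd G p" "r \<notin> nbhd G s"
      using nn hN'[of p] hN'[of s] ps by auto
    show False using ZC[of p s r c e] VG dd na ce i1 i2 i3 by blast
  qed
  have Zc': "\<forall>b'\<in>verts G'. (\<lambda>s t. t \<in> nbhd G' s)\<^sup>*\<^sup>* v b'"
  proof
    fix b' assume b': "b' \<in> verts G'"
    have "(\<lambda>s t. t \<in> nbhd G s)\<^sup>*\<^sup>* x b'" using Z9 b' inV' by blast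
    then have "b' = x \<or> b' = u \<or> (\<lambda>s t. t \<in> nbhd G' s)\<^sup>*\<^sup>* v b'"
    proof (induction rule: rtranclp_induct)
      case base then show ?case by simp
    next
      case (step s t)
      show ?case
      proof (cases "t = x \<or> t = u")
        case True then show ?thesis by blast
      next
        case tF: False
        have tV: "t \<in> verts G'" using step(2) nb_V inV' tF by metis
        show ?thesis
        proof (cases "s = x")
          case True
          then have "t = v" using step(2) Nx tF by auto
          then show ?thesis by simp
        next
          case sx: False
          show ?thesis
          proof (cases "s = u")
            case True
            then have "t = a \<or> t = b" using step(2) Nu tF by auto
            then have "t \<in> nbhd G' v" using N'v by auto
            then show ?thesis by auto
          next
            case su: False
            then have "(\<lambda>s t. t \<in> nbhd G' s)\<^sup>*\<^sup>* v s" using step(3) sx by blast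
            moreover have "t \<in> nbhd G' s" using hN'[OF sx su] step(2) tF by auto
            ultimately show ?thesis by (simp add: rtranclp.rtrancl_into_rtrancl)
          qed
        qed
      qed
    qed
    then show "(\<lambda>s t. t \<in> nbhd G' s)\<^sup>*\<^sup>* v b'" using b' inV' by blast
  qed
  have x1': "\<exists>u' v'. u' \<noteq> v' \<and> nbhd G' v = {u',v'} \<and> nbhd G' u' = nbhd G' v'"
    using N'v ab N'a by blast
  have "zinv G' v" unfolding zinv_def by (intro conjI sg' vV'(1) x1' Z2' Z3' Z4' Z5' ZC' Zc')
  then show ?thesis unfolding G'_def .
qed





lemma iso_extend:
  assumes sg: "simple_graph G" and xV: "x \<in> verts G" and uV: "u \<in> verts G" and xu: "x \<noteq> u"
    and Nx: "nbhd G x = {u,v}" and Nu: "nbhd G u = {x,a,b}" and tw: "nbhd G u = nbhd G v"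
    and V'd: "verts (delete_vertex (delete_vertex G x) u) = verts G - {x} - {u}"
    and abV: "a \<in> verts G - {x} - {u}" "b \<in> verts G - {x} - {u}" "v \<in> verts G - {x} - {u}" and ab: "a \<noteq> b"
    and k: "k \<ge> 2" and bij': "bij_betw f' (verts G - {x} - {u}) {1..2*k}" and fv: "f' v = 1"
    and ep': "\<forall>p\<in>verts (delete_vertex (delete_vertex G x) u). \<forall>q\<in>verts (delete_vertex (delete_vertex G x) u).
        ({p,q} \<in> edges (delete_vertex (delete_vertex G x) u)) = ({f' p, f' q} \<in> edges (candle k))"
  shows "\<exists>f. bij_betw f (verts G) {1..2*Suc k} \<and> f x = 1 \<and>
     (\<forall>p\<in>verts G. \<forall>q\<in>verts G. ({p,q} \<in> edges G) = ({f p, f q} \<in> edges (candle (Suc k))))"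
proof -
  define G' where "G' = delete_vertex (delete_vertex G x) u"
  define V' where "V' = verts G - {x} - {u}"
  have sg': "simple_graph G'" unfolding G'_def by (intro del_simple sg)
  have VG': "verts G' = V'" using V'd unfolding G'_def V'_def .
  have hN': "nbhd G' w = nbhd G w - {x} - {u}" if "w \<noteq> x" "w \<noteq> u" for w
    unfolding G'_def using that by (simp add: del_nb)
  have EP: "({p,q} \<in> edges G) = ({f' p, f' q} \<in> edges (candle k))" if pq: "p \<in> V'" "q \<in> V'" for p q
  proof -
    have "({p,q} \<in> edges G) = (q \<in> nbhd G p)" by (rule nb_edge[OF sg])
    also have "\<dots> = (q \<in> nbhd G' p)" using hN'[of p] pq unfolding V'_def by auto
    also have "\<dots> = ({p,q} \<in> edges G')" by (rule nb_edge[OF sg', symmetric])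
    also have "\<dots> = ({f' p, f' q} \<in> edges (candle k))" using ep' pq VG' unfolding G'_def by blast
    finally show ?thesis .
  qed
  have inj': "inj_on f' V'" using bij' unfolding V'_def bij_betw_def by blast
  have img': "f' ` V' = {1..2*k}" using bij' unfolding V'_def bij_betw_def by blast
  have fr: "f' w \<in> {1..2*k}" if "w \<in> V'" for w using img' that by blast
  have Nv: "nbhd G v = {x,a,b}" using Nu tw by simp
  have fab: "f' a = 2 \<or> f' a = 3" "f' b = 2 \<or> f' b = 3"
  proof -
    have "{v,a} \<in> edges G" "{v,b} \<in> edges G" using Nv nb_edge[OF sg, of v] by auto
    then have "{1, f' a} \<in> edges (candle k)" "{1, f' b} \<in> edges (candle k)"
      using EP[of v a] EP[of v b] abV fv unfolding V'_def by auto
    then show "f' a = 2 \<or> f' a = 3" "f' b = 2 \<or> f' b = 3"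
      using cl1[OF k fr[of a]] cl1[OF k fr[of b]] abV unfolding V'_def by auto
  qed
  have fne: "f' a \<noteq> f' b" using inj' ab abV unfolding V'_def inj_on_def by blast
  have f23: "(f' t = 2 \<or> f' t = 3) = (t = a \<or> t = b)" if "t \<in> V'" for t
  proof
    assume "f' t = 2 \<or> f' t = 3"
    then have "f' t = f' a \<or> f' t = f' b" using fab fne by auto
    then show "t = a \<or> t = b" using inj' that abV unfolding V'_def inj_on_def by blast
  next
    assume "t = a \<or> t = b" then show "f' t = 2 \<or> f' t = 3" using fab by auto
  qed
  have f1: "(f' t = 1) = (t = v)" if "t \<in> V'" for t
    using inj' that abV fv unfolding V'_def inj_on_def by metis
  define f where "f w = (if w = x then 1 else if w = u then 2 else f' w + 2)" for w
  have fx: "f x = 1" "f u = 2" unfolding f_def using xu by auto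
  have fV': "f w = f' w + 2" if "w \<in> V'" for w using that unfolding f_def V'_def by auto
  have inV: "w \<in> verts G \<Longrightarrow> w = x \<or> w = u \<or> w \<in> V'" for w unfolding V'_def by auto
  have frange: "f w \<in> {1..2 * Suc k}" if "w \<in> verts G" for w
    using inV[OF that] fx fV' fr by auto
  have bij: "bij_betw f (verts G) {1..2 * Suc k}"
  proof (rule bij_betw_imageI)
    show "inj_on f (verts G)"
    proof (rule inj_onI)
      fix w1 w2 assume w: "w1 \<in> verts G" "w2 \<in> verts G" "f w1 = f w2"
      show "w1 = w2"
        using inV[OF w(1)] inV[OF w(2)] w(3) fx fV' fr inj' unfolding inj_on_def by fastforce
    qed
    show "f ` verts G = {1..2 * Suc k}"
    proof
      show "f ` verts G \<subseteq> {1..2 * Suc k}" using frange by blast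
      show "{1..2 * Suc k} \<subseteq> f ` verts G"
      proof
        fix i assume i: "i \<in> {1..2 * Suc k}"
        show "i \<in> f ` verts G"
        proof (cases "i \<le> 2")
          case True
          then have "i = 1 \<or> i = 2" using i by auto
          then show ?thesis using fx xV uV by (metis imageI)
        next
          case False
          then have "i - 2 \<in> {1..2*k}" using i by auto
          then obtain w where w: "w \<in> V'" "f' w = i - 2" using img' by (metis imageE)
          then have "f w = i" using fV' False by simp
          moreover have "w \<in> verts G" using w unfolding V'_def by simp
          ultimately show ?thesis by (metis imageI)
        qed
      qed
    qed
  qed
  have k1: "Suc k \<ge> 2" "Suc k \<ge> 3" using k by auto
  have Cx: "({x,q} \<in> edges G) = ({f x, f q} \<in> edges (candle (Suc k)))" if q: "q \<in> verts G" for q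
  proof -
    have "({x,q} \<in> edges G) = (q = u \<or> q = v)" using nb_edge[OF sg, of x q] Nx by simp
    also have "\<dots> = (f q = 2 \<or> f q = 3)"
      using inV[OF q] fx fV' f1 abV fr unfolding V'_def by fastforce
    also have "\<dots> = ({f x, f q} \<in> edges (candle (Suc k)))" using cl1[OF k1(1) frange[OF q]] fx by simp
    finally show ?thesis .
  qed
  have Cu: "({u,q} \<in> edges G) = ({f u, f q} \<in> edges (candle (Suc k)))" if q: "q \<in> verts G" for q
  proof -
    have "({u,q} \<in> edges G) = (q = x \<or> q = a \<or> q = b)" using nb_edge[OF sg, of u q] Nu by simp
    also have "\<dots> = (f q = 1 \<or> f q = 4 \<or> f q = 5)"
    proof -
      have "q = x \<or> q = u \<or> q \<in> V'" by (rule inV[OF q])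
      then show ?thesis
      proof (elim disjE)
        assume "q = x" then show ?thesis using fx by simp
      next
        assume "q = u" then show ?thesis using fx xu abV by auto
      next
        assume qV: "q \<in> V'"
        have "q \<noteq> x" using qV unfolding V'_def by simp
        moreover have "(f q = 1 \<or> f q = 4 \<or> f q = 5) = (f' q = 2 \<or> f' q = 3)" using fV'[OF qV] by auto
        ultimately show ?thesis using f23[OF qV] by simp
      qed
    qed
    also have "\<dots> = ({f u, f q} \<in> edges (candle (Suc k)))" using cl2[OF k1(2) frange[OF q]] fx by simp
    finally show ?thesis .
  qed
  have ed: "({p,q} \<in> edges G) = ({f p, f q} \<in> edges (candle (Suc k)))"
    if pq: "p \<in> verts G" "q \<in> verts G" for p q
  proof -
    have sw: "{p,q} = {q,p}" "{f p, f q} = {f q, f p}" by blast+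
    show ?thesis
    proof (cases "p = x \<or> p = u")
      case True
      then show ?thesis using Cx[OF pq(2)] Cu[OF pq(2)] by blast
    next
      case pF: False
      show ?thesis
      proof (cases "q = x \<or> q = u")
        case True
        then have "({q,p} \<in> edges G) = ({f q, f p} \<in> edges (candle (Suc k)))"
          using Cx[OF pq(1)] Cu[OF pq(1)] by blast
        then show ?thesis unfolding sw .
      next
        case False
        then have p: "p \<in> V'" and q: "q \<in> V'" using pF pq unfolding V'_def by auto
        show ?thesis unfolding fV'[OF p] fV'[OF q] cand_shift[OF k fr[OF p] fr[OF q]] by (rule EP[OF p q])
      qed
    qed
  qed
  show ?thesis using bij fx ed by blast
qed

lemma zinv_candle:
  "zinv G x \<Longrightarrow> \<exists>k\<ge>2. \<exists>f. bij_betw f (verts G) {1..2*k} \<and> f x = 1 \<and>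
     (\<forall>p\<in>verts G. \<forall>q\<in>verts G. ({p,q} \<in> edges G) = ({f p, f q} \<in> edges (candle k)))"
proof (induction "card (verts G)" arbitrary: G x rule: less_induct)
  case less
  note Z = less.prems
  have sg: "simple_graph G" using zinv_sg[OF Z] .
  have xV: "x \<in> verts G" using zinv_x[OF Z] .
  obtain u v where uv: "u \<noteq> v" and Nx: "nbhd G x = {u,v}" and tw: "nbhd G u = nbhd G v"
    using zinv1[OF Z] by blast
  have uV: "u \<in> verts G" "v \<in> verts G" using Nx nb_sub[of G x] by auto
  have xu: "x \<noteq> u" "x \<noteq> v" using Nx nb_irr[OF sg, of x] by auto
  from zinv_R[OF Z uv Nx tw] show ?case
  proof (elim disjE exE conjE)
    fix y assume "y \<noteq> x" "nbhd G u = {x,y}"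
    from zinv_base[OF Z uv Nx tw this] show ?case by (intro exI[of _ 2]) auto
  next
    fix a b assume ab: "a \<noteq> b" "a \<noteq> x" "b \<noteq> x" and Nu: "nbhd G u = {x,a,b}" and tab: "nbhd G a = nbhd G b"
    define G' where "G' = delete_vertex (delete_vertex G x) u"
    have Z': "zinv G' v" unfolding G'_def by (rule zinv_step[OF Z uv Nx tw ab Nu tab])
    have V'd: "verts G' = verts G - {x} - {u}" unfolding G'_def by (simp add: del_verts)
    have "card (verts G') < card (verts G)"
    proof (rule psubset_card_mono)
      show "finite (verts G)" using sg_fin[OF sg] .
      show "verts G' \<subset> verts G" using V'd xV by auto
    qed
    from less.hyps[OF this Z'] obtain k f' where k: "k \<ge> 2" and bij': "bij_betw f' (verts G') {1..2*k}"
      and fv: "f' v = 1" and ep': "\<forall>p\<in>verts G'. \<forall>q\<in>verts G'. ({p,q} \<in> edges G') = ({f' p, f' q} \<in> edges (candle k))"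
      by blast
    have abN: "a \<in> nbhd G u" "b \<in> nbhd G u" using Nu by auto
    have abV: "a \<in> verts G - {x} - {u}" "b \<in> verts G - {x} - {u}" "v \<in> verts G - {x} - {u}"
      using abN nb_V[of a G u] nb_V[of b G u] ab nb_irr[OF sg, of u] uV xu uv by auto
    have "\<exists>f. bij_betw f (verts G) {1..2*Suc k} \<and> f x = 1 \<and>
       (\<forall>p\<in>verts G. \<forall>q\<in>verts G. ({p,q} \<in> edges G) = ({f p, f q} \<in> edges (candle (Suc k))))"
      by (rule iso_extend[OF sg xV uV(1) xu(1) Nx Nu tw V'd[unfolded G'_def] abV ab(1) k
            bij'[unfolded V'd] fv ep'[unfolded G'_def]])
    then show ?case using k by (intro exI[of _ "Suc k"]) auto
  qed
qed

theorem mainTheorem13: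
  fixes G :: "'a graph"
  assumes "simple_graph G"
    and "\<exists>H. condensation H G \<and> graph_iso H cycle4"
    and "q G = 2"
  shows "double_ended_candle G"
proof -
  obtain H where H: "condensation H G" "graph_iso H cycle4" using assms(2) by blast
  have fG: "finv G" by (rule finv_chain[OF H assms(1)])
  obtain A where A: "A \<in> SG G" and O: "\<forall>i\<in>verts G. \<forall>j\<in>verts G. i \<noteq> j \<longrightarrow> {i,j} \<notin> edges G \<longrightarrow>
            (\<Sum>k\<in>verts G. A i k * A k j) = 0"
    using spectral_O[OF assms(1) assms(3)] by blast
  obtain x where Z: "zinv G x" using zinv_from[OF fG A O] by blast
  obtain k f where k: "k \<ge> 2" and bij: "bij_betw f (verts G) {1..2*k}"
    and ep: "\<forall>p\<in>verts G. \<forall>q\<in>verts G. ({p,q} \<in> edges G) = ({f p, f q} \<in> edges (candle k))"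
    using zinv_candle[OF Z] by blast
  have "graph_iso G (candle k)" unfolding graph_iso_def cand_verts using bij ep by blast
  then show ?thesis unfolding double_ended_candle_def using k by blast
qed


end
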